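(* Suppose that $\mathcal X$ is a wide family of subsets of $\mathbb N$ and $\mathfrak A=(\alpha_X:X\in\mathcal X)$ is coherent. Then $\mathcal M_{\mathcal X,\mathfrak A}$ is an almost masa of $\mathcal A_0$.
   Context: Fix an orthonormal basis $(e_k)$ of $\ell_2$. For $A\subseteq\mathbb N$, $P_A$ is the projection onto $\overline{\mathrm{span}}\{e_{2k},e_{2k+1}:k\in A\}$; $H_n=\mathrm{span}\{e_{2n},e_{2n+1}\}$. $\mathcal A_0$ is the set of $T\in\mathcal B(\ell_2)$ with $\langle Te_k,e_m\rangle\ne0\Rightarrow\{k,m\}\subseteq\{2n,2n+1\}$ for some $n$, written $T=(T_n)$ with $T_n\in\mathcal B(H_n)$ the restriction; $\mathcal A_0(X)=\{T\in\mathcal A_0:T_n=0\ \forall n\notin X\}$. For $\alpha\in(71/72,1]$, $f_{\alpha,2n}=\alpha e_{2n}+\sqrt{1-\alpha^2}e_{2n+1}$, $f_{\alpha,2n+1}=\sqrt{1-\alpha^2}e_{2n}-\alpha e_{2n+1}$; $\mathcal D(X,\alpha)$ is the set of $T\in\mathcal A_0(X)$ with $T_n$ diagonal in $\{f_{\alpha,2n},f_{\alpha,2n+1}\}$ for all $n\in X$; $\mathcal D_{\mathcal K}(X,\alpha)=\{S+R:S\in\mathcal D(X,\alpha),R\in\mathcal K(\ell_2)\cap\mathcal A_0(X)\}$. $\mathcal M_{\mathcal X,\mathfrak A}=\{T\in\mathcal A_0:P_XTP_X\in\mathcal D_{\mathcal K}(X,\alpha_X)\ \forall X\in\mathcal X\}$.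 $\mathcal X$ is wide if every infinite subset of $\mathbb N$ has infinite intersection with some member of $\mathcal X$. $\mathfrak A$ is coherent if $\alpha_X\in(71/72,1]$ for all $X$ and $\alpha_X=\alpha_Y$ whenever $X\cap Y$ is infinite. $S,T$ almost commute if $ST-TS$ is compact; an almost masa of a C*-algebra $\mathcal C\subseteq\mathcal B(\ell_2)$ is a C*-subalgebra maximal under inclusion among C*-subalgebras of $\mathcal C$ whose elements pairwise almost commute. *)

theory Defs
  imports Complex_Main
begin

text \<open>The Hilbert space ell_2 is modelled as the set of square-summable complex sequences
  indexed by nat; the fixed orthonormal basis (e_k) is the standard unit vector basis.
  A bounded operator is a function on sequences that maps ell_2 linearly and boundedly
  into ell_2 and is 0 outside ell_2 (so equality of operators is equality on ell_2).\<close>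

definition ell2 :: "(nat \<Rightarrow> complex) set" where
  "ell2 = {x. summable (\<lambda>k. (cmod (x k))\<^sup>2)}"

definition l2norm :: "(nat \<Rightarrow> complex) \<Rightarrow> real" where
  "l2norm x = sqrt (\<Sum>k. (cmod (x k))\<^sup>2)"

definition l2inner :: "(nat \<Rightarrow> complex) \<Rightarrow> (nat \<Rightarrow> complex) \<Rightarrow> complex" where
  "l2inner x y = (\<Sum>k. x k * cnj (y k))"

definition vadd :: "(nat \<Rightarrow> complex) \<Rightarrow> (nat \<Rightarrow> complex) \<Rightarrow> (nat \<Rightarrow> complex)" where
  "vadd x y = (\<lambda>j. x j + y j)"

definition vsub :: "(nat \<Rightarrow> complex) \<Rightarrow> (nat \<Rightarrow> complex) \<Rightarrow> (nat \<Rightarrow> complex)" where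
  "vsub x y = (\<lambda>j. x j - y j)"

definition vscale :: "complex \<Rightarrow> (nat \<Rightarrow> complex) \<Rightarrow> (nat \<Rightarrow> complex)" where
  "vscale c x = (\<lambda>j. c * x j)"

definition basis_vec :: "nat \<Rightarrow> (nat \<Rightarrow> complex)" where
  "basis_vec k = (\<lambda>j. if j = k then 1 else 0)"

type_synonym op = "(nat \<Rightarrow> complex) \<Rightarrow> (nat \<Rightarrow> complex)"

definition bounded_op :: "op \<Rightarrow> bool" where
  "bounded_op T \<longleftrightarrow>
     (\<forall>x\<in>ell2. T x \<in> ell2) \<and>
     (\<forall>x\<in>ell2. \<forall>y\<in>ell2. T (vadd x y) = vadd (T x) (T y)) \<and>
     (\<forall>x\<in>ell2. \<forall>c. T (vscale c x) = vscale c (T x)) \<and>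
     (\<exists>C. \<forall>x\<in>ell2. l2norm (T x) \<le> C * l2norm x) \<and>
     (\<forall>x. x \<notin> ell2 \<longrightarrow> T x = (\<lambda>j. 0))"

definition Bop :: "op set" where
  "Bop = {T. bounded_op T}"

definition opnorm :: "op \<Rightarrow> real" where
  "opnorm T = Sup {l2norm (T x) | x. x \<in> ell2 \<and> l2norm x \<le> 1}"

definition op_add :: "op \<Rightarrow> op \<Rightarrow> op" where
  "op_add S T = (\<lambda>x. vadd (S x) (T x))"

definition op_sub :: "op \<Rightarrow> op \<Rightarrow> op" where
  "op_sub S T = (\<lambda>x. vsub (S x) (T x))"

definition op_scale :: "complex \<Rightarrow> op \<Rightarrow> op" where
  "op_scale c T = (\<lambda>x. vscale c (T x))"

definition op_mult :: "op \<Rightarrow> op \<Rightarrow> op" where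
  "op_mult S T = (\<lambda>x. S (T x))"

definition is_adjoint :: "op \<Rightarrow> op \<Rightarrow> bool" where
  "is_adjoint T S \<longleftrightarrow> S \<in> Bop \<and>
     (\<forall>x\<in>ell2. \<forall>y\<in>ell2. l2inner (T x) y = l2inner x (S y))"

definition compact_op :: "op \<Rightarrow> bool" where
  "compact_op T \<longleftrightarrow> T \<in> Bop \<and>
     (\<forall>x :: nat \<Rightarrow> (nat \<Rightarrow> complex). (\<forall>n. x n \<in> ell2) \<and> (\<exists>B. \<forall>n. l2norm (x n) \<le> B) \<longrightarrow>
        (\<exists>r y. strict_mono r \<and> y \<in> ell2 \<and>
               (\<lambda>n. l2norm (vsub (T (x (r n))) y)) \<longlonglongrightarrow> 0))"

definition cstar_subalg :: "op set \<Rightarrow> bool" where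
  "cstar_subalg C \<longleftrightarrow> C \<subseteq> Bop \<and> (\<lambda>x. \<lambda>j. 0) \<in> C \<and>
     (\<forall>S\<in>C. \<forall>T\<in>C. op_add S T \<in> C) \<and>
     (\<forall>c. \<forall>T\<in>C. op_scale c T \<in> C) \<and>
     (\<forall>S\<in>C. \<forall>T\<in>C. op_mult S T \<in> C) \<and>
     (\<forall>T\<in>C. \<exists>S\<in>C. is_adjoint T S) \<and>
     (\<forall>Tn S. (\<forall>n. Tn n \<in> C) \<and> S \<in> Bop \<and> (\<lambda>n. opnorm (op_sub (Tn n) S)) \<longlonglongrightarrow> 0 \<longrightarrow> S \<in> C)"

definition almost_commute :: "op \<Rightarrow> op \<Rightarrow> bool" where
  "almost_commute S T \<longleftrightarrow> compact_op (op_sub (op_mult S T) (op_mult T S))"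

definition almost_masa :: "op set \<Rightarrow> op set \<Rightarrow> bool" where
  "almost_masa \<C> M \<longleftrightarrow>
     cstar_subalg M \<and> M \<subseteq> \<C> \<and> (\<forall>S\<in>M. \<forall>T\<in>M. almost_commute S T) \<and>
     (\<forall>N. cstar_subalg N \<and> N \<subseteq> \<C> \<and> (\<forall>S\<in>N. \<forall>T\<in>N. almost_commute S T) \<and> M \<subseteq> N
          \<longrightarrow> N = M)"

definition A0 :: "op set" where
  "A0 = {T \<in> Bop. \<forall>k m. l2inner (T (basis_vec k)) (basis_vec m) \<noteq> 0 \<longrightarrow>
                     (\<exists>n. {k, m} \<subseteq> {2*n, 2*n+1})}"

definition Hblock :: "nat \<Rightarrow> (nat \<Rightarrow> complex) set" where
  "Hblock n = {x. \<forall>j. j \<noteq> 2*n \<and> j \<noteq> 2*n+1 \<longrightarrow> x j = 0}"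

definition proj :: "nat set \<Rightarrow> op" where
  "proj A = (\<lambda>x. if x \<in> ell2 then (\<lambda>j. if j div 2 \<in> A then x j else 0) else (\<lambda>j. 0))"

definition A0_on :: "nat set \<Rightarrow> op set" where
  "A0_on X = {T \<in> A0. \<forall>n. n \<notin> X \<longrightarrow> (\<forall>x\<in>Hblock n. T x = (\<lambda>j. 0))}"

definition fvec0 :: "real \<Rightarrow> nat \<Rightarrow> (nat \<Rightarrow> complex)" where
  "fvec0 \<alpha> n = vadd (vscale (complex_of_real \<alpha>) (basis_vec (2*n)))
                    (vscale (complex_of_real (sqrt (1 - \<alpha>\<^sup>2))) (basis_vec (2*n+1)))"

definition fvec1 :: "real \<Rightarrow> nat \<Rightarrow> (nat \<Rightarrow> complex)" where
  "fvec1 \<alpha> n = vsub (vscale (complex_of_real (sqrt (1 - \<alpha>\<^sup>2))) (basis_vec (2*n)))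
                    (vscale (complex_of_real \<alpha>) (basis_vec (2*n+1)))"

definition Dset :: "nat set \<Rightarrow> real \<Rightarrow> op set" where
  "Dset X \<alpha> = {T \<in> A0_on X. \<forall>n\<in>X. (\<exists>c. T (fvec0 \<alpha> n) = vscale c (fvec0 \<alpha> n)) \<and>
                                     (\<exists>\<mu>. T (fvec1 \<alpha> n) = vscale \<mu> (fvec1 \<alpha> n))}"

definition DKset :: "nat set \<Rightarrow> real \<Rightarrow> op set" where
  "DKset X \<alpha> = {op_add S R | S R. S \<in> Dset X \<alpha> \<and> compact_op R \<and> R \<in> A0_on X}"

definition Mset :: "nat set set \<Rightarrow> (nat set \<Rightarrow> real) \<Rightarrow> op set" where
  "Mset \<X> \<alpha> = {T \<in> A0. \<forall>X\<in>\<X>. op_mult (proj X) (op_mult T (proj X)) \<in> DKset X (\<alpha> X)}"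

definition wide :: "nat set set \<Rightarrow> bool" where
  "wide \<X> \<longleftrightarrow> (\<forall>A. infinite A \<longrightarrow> (\<exists>X\<in>\<X>. infinite (A \<inter> X)))"

definition coherent :: "nat set set \<Rightarrow> (nat set \<Rightarrow> real) \<Rightarrow> bool" where
  "coherent \<X> \<alpha> \<longleftrightarrow> (\<forall>X\<in>\<X>. 71/72 < \<alpha> X \<and> \<alpha> X \<le> 1) \<and>
     (\<forall>X\<in>\<X>. \<forall>Y\<in>\<X>. infinite (X \<inter> Y) \<longrightarrow> \<alpha> X = \<alpha> Y)"

end

theory Submission
  imports Defs "HOL-Analysis.Analysis" "HOL-Library.Diagonal_Subsequence"
begin


lemma ell2_summable: "x \<in> ell2 \<Longrightarrow> summable (\<lambda>k. (cmod (x k))\<^sup>2)"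
  by (simp add: ell2_def)

lemma l2norm_sq: "x \<in> ell2 \<Longrightarrow> (l2norm x)\<^sup>2 = (\<Sum>k. (cmod (x k))\<^sup>2)"
  unfolding l2norm_def by (simp add: ell2_def suminf_nonneg)

lemma l2norm_nonneg: "x \<in> ell2 \<Longrightarrow> 0 \<le> l2norm x"
  unfolding l2norm_def by (simp add: ell2_def suminf_nonneg)

lemma psum_le: "x \<in> ell2 \<Longrightarrow> (\<Sum>k\<in>I. (cmod (x k))\<^sup>2) \<le> (l2norm x)\<^sup>2" if "finite I"
  using that by (simp add: l2norm_sq sum_le_suminf ell2_def)

lemma coord_le: "x \<in> ell2 \<Longrightarrow> cmod (x j) \<le> l2norm x"
proof -
  assume x: "x \<in> ell2"
  have "(cmod (x j))\<^sup>2 \<le> (l2norm x)\<^sup>2" using psum_le[of "{j}" x] x by simp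
  then show ?thesis using l2norm_nonneg[OF x] by (simp add: abs_le_square_iff power2_le_iff_abs_le)
qed

lemma ell2I:
  assumes "\<And>N. (\<Sum>k<N. (cmod (x k))\<^sup>2) \<le> B"
  shows "x \<in> ell2" "l2norm x \<le> sqrt B"
proof -
  have s: "summable (\<lambda>k. (cmod (x k))\<^sup>2)"
    by (rule summableI_nonneg_bounded[where x=B]) (use assms in auto)
  then show "x \<in> ell2" by (simp add: ell2_def)
  have "(\<Sum>k. (cmod (x k))\<^sup>2) \<le> B" by (rule suminf_le_const[OF s assms])
  then show "l2norm x \<le> sqrt B" unfolding l2norm_def by simp
qed

lemma ell2_finite: assumes "\<And>j. N \<le> j \<Longrightarrow> x j = 0" shows "x \<in> ell2"
  unfolding ell2_def mem_Collect_eq by (rule summable_finite[of "{..<N}"]) (use assms in auto)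

lemma ell2_zero[simp]: "(\<lambda>j. 0) \<in> ell2"
  by (rule ell2_finite[of 0]) auto

lemma basis_in[simp]: "basis_vec k \<in> ell2"
  by (rule ell2_finite[of "Suc k"]) (auto simp: basis_vec_def)

lemma l2norm_basis[simp]: "l2norm (basis_vec k) = 1"
proof -
  have "(\<lambda>j. (cmod (basis_vec k j))\<^sup>2) = (\<lambda>j. if j = k then 1 else 0)"
    by (auto simp: basis_vec_def)
  moreover have "(\<lambda>j. if j = k then (1::real) else 0) sums 1"
    using sums_single[of k "\<lambda>_. (1::real)"] by simp
  ultimately show ?thesis unfolding l2norm_def by (simp add: sums_iff)
qed

lemma l2inner_basis[simp]: "l2inner v (basis_vec m) = v m"
proof -
  have "(\<lambda>k. v k * cnj (basis_vec m k)) = (\<lambda>k. if k = m then v k else 0)"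
    by (auto simp: basis_vec_def)
  then show ?thesis unfolding l2inner_def using sums_single[of m v] by (simp add: sums_iff)
qed

lemma sq_add_le: "(cmod (a + b))\<^sup>2 \<le> 2 * (cmod a)\<^sup>2 + 2 * (cmod b)\<^sup>2"
proof -
  have "cmod (a + b) \<le> cmod a + cmod b" by (rule norm_triangle_ineq)
  then have "(cmod (a + b))\<^sup>2 \<le> (cmod a + cmod b)\<^sup>2" by (simp add: power_mono)
  also have "\<dots> \<le> 2 * (cmod a)\<^sup>2 + 2 * (cmod b)\<^sup>2"
  proof -
    have "0 \<le> (cmod a - cmod b)\<^sup>2" by simp
    then show ?thesis by (simp add: power2_eq_square algebra_simps)
  qed
  finally show ?thesis .
qed

lemma sq_diff_le: "(cmod (a - b))\<^sup>2 \<le> 2 * (cmod a)\<^sup>2 + 2 * (cmod b)\<^sup>2"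
  using sq_add_le[of a "-b"] by simp

lemma ell2_vadd: assumes "x \<in> ell2" "y \<in> ell2" shows "vadd x y \<in> ell2"
  unfolding ell2_def vadd_def mem_Collect_eq
  apply (rule summable_comparison_test'[where g="\<lambda>k. 2 * (cmod (x k))\<^sup>2 + 2 * (cmod (y k))\<^sup>2" and N=0])
  using assms by (auto intro!: summable_add summable_mult simp: sq_add_le ell2_def)

lemma ell2_vsub: assumes "x \<in> ell2" "y \<in> ell2" shows "vsub x y \<in> ell2"
  unfolding ell2_def vsub_def mem_Collect_eq
  apply (rule summable_comparison_test'[where g="\<lambda>k. 2 * (cmod (x k))\<^sup>2 + 2 * (cmod (y k))\<^sup>2" and N=0])
  using assms by (auto intro!: summable_add summable_mult simp: sq_diff_le ell2_def)

lemma ell2_vscale: "x \<in> ell2 \<Longrightarrow> vscale c x \<in> ell2"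
  unfolding ell2_def vscale_def
  by (auto simp: norm_mult power_mult_distrib intro!: summable_mult)

lemma l2norm_vsub_sq: "x \<in> ell2 \<Longrightarrow> y \<in> ell2 \<Longrightarrow>
   (l2norm (vsub x y))\<^sup>2 \<le> 2 * (l2norm x)\<^sup>2 + 2 * (l2norm y)\<^sup>2"
proof -
  assume x: "x \<in> ell2" and y: "y \<in> ell2"
  have "(l2norm (vsub x y))\<^sup>2 = (\<Sum>k. (cmod (x k - y k))\<^sup>2)"
    using l2norm_sq[OF ell2_vsub[OF x y]] by (simp add: vsub_def)
  also have "\<dots> \<le> (\<Sum>k. 2 * (cmod (x k))\<^sup>2 + 2 * (cmod (y k))\<^sup>2)"
    apply (rule suminf_le)
    using ell2_vsub[OF x y] x y by (auto simp: sq_diff_le ell2_def vsub_def intro!: summable_add summable_mult)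
  also have "\<dots> = 2 * (l2norm x)\<^sup>2 + 2 * (l2norm y)\<^sup>2"
    using x y by (simp add: l2norm_sq suminf_add[symmetric] suminf_mult ell2_def summable_mult)
  finally show ?thesis .
qed


section \<open>Bounded operators\<close>

lemma bop_ell2: "T \<in> Bop \<Longrightarrow> x \<in> ell2 \<Longrightarrow> T x \<in> ell2"
  by (simp add: Bop_def bounded_op_def)
lemma bop_add: "T \<in> Bop \<Longrightarrow> x \<in> ell2 \<Longrightarrow> y \<in> ell2 \<Longrightarrow> T (vadd x y) = vadd (T x) (T y)"
  by (simp add: Bop_def bounded_op_def)
lemma bop_scale: "T \<in> Bop \<Longrightarrow> x \<in> ell2 \<Longrightarrow> T (vscale c x) = vscale c (T x)"
  by (simp add: Bop_def bounded_op_def)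
lemma bop_out: "T \<in> Bop \<Longrightarrow> x \<notin> ell2 \<Longrightarrow> T x = (\<lambda>j. 0)"
  by (simp add: Bop_def bounded_op_def)
lemma bop_bound: assumes "T \<in> Bop" obtains C where "0 \<le> C" "\<And>x. x \<in> ell2 \<Longrightarrow> l2norm (T x) \<le> C * l2norm x"
proof -
  obtain C where C: "\<forall>x\<in>ell2. l2norm (T x) \<le> C * l2norm x"
    using assms by (auto simp: Bop_def bounded_op_def)
  have "l2norm (T x) \<le> max C 0 * l2norm x" if "x \<in> ell2" for x
  proof -
    have "C * l2norm x \<le> max C 0 * l2norm x" by (rule mult_right_mono) (auto simp: l2norm_nonneg[OF that])
    then show ?thesis using C that by force
  qed
  then show ?thesis using that[of "max C 0"] by simp
qed
lemma bop_zero: "T \<in> Bop \<Longrightarrow> T (\<lambda>j. 0) = (\<lambda>j. 0)"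
proof -
  assume T: "T \<in> Bop"
  have "T (vscale 0 (\<lambda>j. 0)) = vscale 0 (T (\<lambda>j. 0))" by (rule bop_scale[OF T ell2_zero])
  then show ?thesis by (simp add: vscale_def)
qed

definition ent :: "op \<Rightarrow> nat \<Rightarrow> nat \<Rightarrow> complex" where
  "ent T j i = T (basis_vec i) j"

definition blockop :: "(nat \<Rightarrow> nat \<Rightarrow> complex) \<Rightarrow> op" where
  "blockop E x = (if x \<in> ell2 then (\<lambda>j. E j (2 * (j div 2)) * x (2 * (j div 2)) +
                                        E j (2 * (j div 2) + 1) * x (2 * (j div 2) + 1))
                  else (\<lambda>j. 0))"

lemma div2_cases: "i div 2 = (m::nat) \<Longrightarrow> i = 2*m \<or> i = 2*m+1"
  by presburger

lemma A0_Bop: "T \<in> A0 \<Longrightarrow> T \<in> Bop" by (simp add: A0_def)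

lemma A0_ent: assumes "T \<in> A0" "ent T j i \<noteq> 0" shows "i div 2 = j div 2"
proof -
  have "l2inner (T (basis_vec i)) (basis_vec j) \<noteq> 0" using assms(2) by (simp add: ent_def)
  then obtain n where "{i, j} \<subseteq> {2*n, 2*n+1}" using assms(1) by (auto simp: A0_def)
  then show ?thesis by auto
qed

lemma tail_tendsto:
  assumes x: "x \<in> ell2"
  shows "(\<lambda>N. l2norm (\<lambda>k. if k < N then 0 else x k)) \<longlonglongrightarrow> 0"
proof -
  let ?f = "\<lambda>k. (cmod (x k))\<^sup>2"
  have s: "summable ?f" using x by (simp add: ell2_def)
  have eq: "l2norm (\<lambda>k. if k < N then 0 else x k) = sqrt (suminf ?f - (\<Sum>k<N. ?f k))" for N
  proof -
    have "(\<lambda>k. ?f k - (if k \<in> {..<N} then ?f k else 0)) sums (suminf ?f - (\<Sum>k\<in>{..<N}. ?f k))"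
      by (rule sums_diff[OF summable_sums[OF s] sums_If_finite_set]) simp
    moreover have "(\<lambda>k. ?f k - (if k \<in> {..<N} then ?f k else 0)) = (\<lambda>k. (cmod (if k < N then 0 else x k))\<^sup>2)"
      by auto
    ultimately show ?thesis unfolding l2norm_def by (simp add: sums_iff)
  qed
  have "(\<lambda>N. sqrt (suminf ?f - (\<Sum>k<N. ?f k))) \<longlonglongrightarrow> sqrt (suminf ?f - suminf ?f)"
    by (intro tendsto_intros summable_LIMSEQ s)
  then show ?thesis unfolding eq by simp
qed

lemma A0_matrix:
  assumes T: "T \<in> A0"
  shows "T = blockop (ent T)"
proof
  fix x
  have TB: "T \<in> Bop" using T by (rule A0_Bop)
  show "T x = blockop (ent T) x"
  proof (cases "x \<in> ell2")
    case False
    then show ?thesis using bop_out[OF TB False] by (simp add: blockop_def)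
  next
    case x: True
    obtain C where C0: "0 \<le> C" and C: "\<And>y. y \<in> ell2 \<Longrightarrow> l2norm (T y) \<le> C * l2norm y"
      using bop_bound[OF TB] by blast
    define tr where "tr N = (\<lambda>k. if k < N then x k else 0)" for N
    define tl where "tl N = (\<lambda>k. if k < N then 0 else x k)" for N
    have tr_in: "tr N \<in> ell2" for N by (rule ell2_finite[of N]) (simp add: tr_def)
    have tl_in: "tl N \<in> ell2" for N
    proof -
      have "tl N = vsub x (tr N)" by (auto simp: tl_def tr_def vsub_def)
      then show ?thesis using ell2_vsub[OF x tr_in] by simp
    qed
    have trj: "T (tr N) j = (\<Sum>i<N. x i * ent T j i)" for N j
    proof (induction N)
      case 0
      have "tr 0 = (\<lambda>j. 0)" by (simp add: tr_def)
      then show ?case using bop_zero[OF TB] by simp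
    next
      case (Suc N)
      have "tr (Suc N) = vadd (tr N) (vscale (x N) (basis_vec N))"
        by (rule ext) (auto simp: tr_def vadd_def vscale_def basis_vec_def less_Suc_eq)
      then have "T (tr (Suc N)) = vadd (T (tr N)) (vscale (x N) (T (basis_vec N)))"
        using bop_add[OF TB tr_in ell2_vscale[OF basis_in]] bop_scale[OF TB basis_in] by simp
      then show ?case using Suc by (simp add: vadd_def vscale_def ent_def)
    qed
    show ?thesis
    proof
      fix j :: nat
      define m where "m = j div 2"
      define blk where "blk = ent T j (2*m) * x (2*m) + ent T j (2*m+1) * x (2*m+1)"
      have sumN: "(\<Sum>i<N. x i * ent T j i) = blk" if "2*m+2 \<le> N" for N
      proof -
        have "(\<Sum>i<N. x i * ent T j i) = (\<Sum>i\<in>{2*m, 2*m+1}. x i * ent T j i)"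
          apply (rule sum.mono_neutral_right)
          using that apply (auto simp: m_def)
          using A0_ent[OF T, of j] div2_cases by fastforce
        then show ?thesis by (simp add: blk_def)
      qed
      have split: "T x j = T (tr N) j + T (tl N) j" for N
      proof -
        have "x = vadd (tr N) (tl N)" by (auto simp: tr_def tl_def vadd_def)
        then have "T x = vadd (T (tr N)) (T (tl N))" using bop_add[OF TB tr_in tl_in] by metis
        then show ?thesis by (simp add: vadd_def)
      qed
      have bnd: "cmod (T x j - blk) \<le> C * l2norm (tl N)" if "2*m+2 \<le> N" for N
      proof -
        have "T x j - blk = T (tl N) j" using split[of N] trj[of N j] sumN[OF that] by simp
        also have "cmod \<dots> \<le> l2norm (T (tl N))" by (rule coord_le[OF bop_ell2[OF TB tl_in]])
        also have "\<dots> \<le> C * l2norm (tl N)" by (rule C[OF tl_in])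
        finally show ?thesis .
      qed
      have "(\<lambda>N. C * l2norm (tl N)) \<longlonglongrightarrow> C * 0"
        using tail_tendsto[OF x] unfolding tl_def by (intro tendsto_intros)
      then have "(\<lambda>N. C * l2norm (tl N)) \<longlonglongrightarrow> 0" by simp
      then have "cmod (T x j - blk) \<le> 0"
        by (rule LIMSEQ_le_const) (use bnd in auto)
      then have "T x j = blk" by simp
      then show "T x j = blockop (ent T) x j" using x by (simp add: blockop_def blk_def m_def)
    qed
  qed
qed


section \<open>Block operators\<close>

lemma pair_sum: "(\<Sum>j<2*N. f j) = (\<Sum>n<N. f (2*n) + f (2*n+1))"
  for f :: "nat \<Rightarrow> 'a::comm_monoid_add" and N :: nat
  by (induction N) (auto simp: sum.lessThan_Suc add.assoc)

lemma cmod_prod_sq_le: "cmod e \<le> K \<Longrightarrow> (cmod (e * y))\<^sup>2 \<le> K\<^sup>2 * (cmod y)\<^sup>2"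
  by (simp add: norm_mult power_mult_distrib mult_right_mono power_mono)

lemma bo_coord_sq:
  assumes "\<And>i. cmod (E j i) \<le> K"
  shows "(cmod (E j (2*m) * x (2*m) + E j (2*m+1) * x (2*m+1)))\<^sup>2
         \<le> 2 * K\<^sup>2 * ((cmod (x (2*m)))\<^sup>2 + (cmod (x (2*m+1)))\<^sup>2)"
proof -
  have "(cmod (E j (2*m) * x (2*m) + E j (2*m+1) * x (2*m+1)))\<^sup>2
        \<le> 2 * (cmod (E j (2*m) * x (2*m)))\<^sup>2 + 2 * (cmod (E j (2*m+1) * x (2*m+1)))\<^sup>2"
    by (rule sq_add_le)
  also have "\<dots> \<le> 2 * (K\<^sup>2 * (cmod (x (2*m)))\<^sup>2) + 2 * (K\<^sup>2 * (cmod (x (2*m+1)))\<^sup>2)"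
    using cmod_prod_sq_le[OF assms] by (intro add_mono mult_left_mono) auto
  finally show ?thesis by (simp add: algebra_simps)
qed

lemma bo_psum:
  assumes x: "x \<in> ell2" and E: "\<And>j i. cmod (E j i) \<le> K (j div 2)"
  shows "(\<Sum>j<2*N. (cmod (blockop E x j))\<^sup>2)
         \<le> (\<Sum>n<N. 4 * (K n)\<^sup>2 * ((cmod (x (2*n)))\<^sup>2 + (cmod (x (2*n+1)))\<^sup>2))"
  unfolding pair_sum
proof (rule sum_mono)
  fix n
  have a: "(cmod (blockop E x (2*n)))\<^sup>2 \<le> 2 * (K n)\<^sup>2 * ((cmod (x (2*n)))\<^sup>2 + (cmod (x (2*n+1)))\<^sup>2)"
    using bo_coord_sq[of E "2*n" "K n" n x] E[of "2*n"] x by (simp add: blockop_def)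
  have b: "(cmod (blockop E x (2*n+1)))\<^sup>2 \<le> 2 * (K n)\<^sup>2 * ((cmod (x (2*n)))\<^sup>2 + (cmod (x (2*n+1)))\<^sup>2)"
  proof -
    have d: "(2*n+1) div 2 = n" by simp
    show ?thesis
      using bo_coord_sq[of E "2*n+1" "K n" n x] E[of "2*n+1"] x unfolding blockop_def d by simp
  qed
  show "(cmod (blockop E x (2*n)))\<^sup>2 + (cmod (blockop E x (2*n+1)))\<^sup>2
        \<le> 4 * (K n)\<^sup>2 * ((cmod (x (2*n)))\<^sup>2 + (cmod (x (2*n+1)))\<^sup>2)"
    using add_mono[OF a b] by simp
qed

lemma bo_norm:
  assumes x: "x \<in> ell2" and E: "\<And>j i. cmod (E j i) \<le> K"
  shows "blockop E x \<in> ell2" "l2norm (blockop E x) \<le> 2 * K * l2norm x"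
proof -
  have K0: "0 \<le> K" using order_trans[OF norm_ge_zero E[of 0 0]] .
  have b: "(\<Sum>j<N. (cmod (blockop E x j))\<^sup>2) \<le> 4 * K\<^sup>2 * (l2norm x)\<^sup>2" for N
  proof -
    have "(\<Sum>j<N. (cmod (blockop E x j))\<^sup>2) \<le> (\<Sum>j<2*N. (cmod (blockop E x j))\<^sup>2)"
      by (rule sum_mono2) auto
    also have "\<dots> \<le> (\<Sum>n<N. 4 * K\<^sup>2 * ((cmod (x (2*n)))\<^sup>2 + (cmod (x (2*n+1)))\<^sup>2))"
      using bo_psum[OF x, of E "\<lambda>_. K" N] E by simp
    also have "\<dots> = 4 * K\<^sup>2 * (\<Sum>j<2*N. (cmod (x j))\<^sup>2)"
      by (simp add: pair_sum sum_distrib_left)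
    also have "\<dots> \<le> 4 * K\<^sup>2 * (l2norm x)\<^sup>2"
      using psum_le[OF _ x] by (intro mult_left_mono) auto
    finally show ?thesis .
  qed
  show "blockop E x \<in> ell2" by (rule ell2I(1)[OF b])
  have "l2norm (blockop E x) \<le> sqrt (4 * K\<^sup>2 * (l2norm x)\<^sup>2)" by (rule ell2I(2)[OF b])
  also have "\<dots> = 2 * K * l2norm x"
    using K0 l2norm_nonneg[OF x] by (simp add: real_sqrt_mult)
  finally show "l2norm (blockop E x) \<le> 2 * K * l2norm x" .
qed

lemma blockop_Bop:
  assumes E: "\<And>j i. cmod (E j i) \<le> K"
  shows "blockop E \<in> Bop"
  unfolding Bop_def bounded_op_def mem_Collect_eq
proof (intro conjI ballI allI impI)
  show "blockop E x \<in> ell2" if "x \<in> ell2" for x by (rule bo_norm(1)[OF that E])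
  show "\<exists>C. \<forall>x\<in>ell2. l2norm (blockop E x) \<le> C * l2norm x"
    using bo_norm(2)[of _ E K, OF _ E] by blast
  show "blockop E x = (\<lambda>j. 0)" if "x \<notin> ell2" for x using that by (simp add: blockop_def)
  show "blockop E (vadd x y) = vadd (blockop E x) (blockop E y)" if "x \<in> ell2" "y \<in> ell2" for x y
    using that ell2_vadd[OF that] by (auto simp: blockop_def vadd_def algebra_simps)
  show "blockop E (vscale c x) = vscale c (blockop E x)" if "x \<in> ell2" for x c
    using that ell2_vscale[OF that] by (auto simp: blockop_def vscale_def algebra_simps)
qed

lemma ent_blockop: "ent (blockop E) j i = (if i div 2 = j div 2 then E j i else 0)"
proof -
  have "i div 2 = j div 2 \<longleftrightarrow> i = 2*(j div 2) \<or> i = 2*(j div 2)+1" by presburger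
  moreover have "basis_vec i \<in> ell2" by simp
  ultimately show ?thesis unfolding ent_def blockop_def by (auto simp: basis_vec_def)
qed

lemma blockop_A0:
  assumes E: "\<And>j i. cmod (E j i) \<le> K"
  shows "blockop E \<in> A0"
  unfolding A0_def mem_Collect_eq
proof (intro conjI allI impI)
  show "blockop E \<in> Bop" by (rule blockop_Bop[OF E])
  fix k m assume "l2inner (blockop E (basis_vec k)) (basis_vec m) \<noteq> 0"
  then have "k div 2 = m div 2" using ent_blockop[of E m k] by (auto simp: ent_def split: if_splits)
  then show "\<exists>n. {k, m} \<subseteq> {2 * n, 2 * n + 1}"
    using div2_cases[of k "m div 2"] div2_cases[of m "m div 2"] by auto
qed

lemma A0_ent_bound:
  assumes "T \<in> Bop" obtains K where "\<And>j i. cmod (ent T j i) \<le> K"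
proof -
  obtain C where "0 \<le> C" and C: "\<And>x. x \<in> ell2 \<Longrightarrow> l2norm (T x) \<le> C * l2norm x"
    using bop_bound[OF assms] by blast
  have "cmod (ent T j i) \<le> C" for j i
    using coord_le[OF bop_ell2[OF assms basis_in], of i j] C[OF basis_in, of i] by (simp add: ent_def)
  then show ?thesis using that by blast
qed


lemma diag_subseq:
  fixes x :: "nat \<Rightarrow> nat \<Rightarrow> complex"
  assumes bd: "\<And>k j. cmod (x k j) \<le> B"
  shows "\<exists>r z. strict_mono r \<and> (\<forall>j. (\<lambda>k. x (r k) j) \<longlonglongrightarrow> z j)"
proof -
  let ?P = "\<lambda>n. \<lambda>s. convergent (\<lambda>k. x (s k) n)"
  interpret nat: subseqs ?P
  proof (unfold convergent_def, unfold subseqs_def, auto)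
    fix n :: nat and s :: "nat \<Rightarrow> nat" assume s: "strict_mono s"
    have "\<And>k. x (s k) n \<in> cball 0 B"
      using bd by (simp add: dist_norm)
    then have "\<exists>l s'. strict_mono s' \<and> ((\<lambda>k. x (s k) n) \<circ> s') \<longlonglongrightarrow> l"
      using compact_cball compact_imp_seq_compact seq_compactE by metis
    thus "\<exists>s'. strict_mono (s'::nat\<Rightarrow>nat) \<and> (\<exists>l. (\<lambda>k. x (s (s' k)) n) \<longlonglongrightarrow> l)"
      by (auto simp: comp_def)
  qed
  define d where "d = nat.diagseq"
  have subseq: "strict_mono d"
    unfolding d_def using nat.subseq_diagseq by auto
  have cnv: "?P n d" for n
  proof -
    have Pn_seqseq: "?P n (nat.seqseq (Suc n))"
      by (rule nat.seqseq_holds)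
    have 1: "(\<lambda>k. x ((nat.seqseq (Suc n) \<circ> (\<lambda>k. nat.fold_reduce (Suc n) k
      (Suc n + k))) k) n) = (\<lambda>k. x (nat.seqseq (Suc n) k) n) \<circ>
      (\<lambda>k. nat.fold_reduce (Suc n) k (Suc n + k))"
      by auto
    have 2: "?P n (d \<circ> ((+) (Suc n)))"
      unfolding d_def nat.diagseq_seqseq 1
      by (intro convergent_subseq_convergent Pn_seqseq nat.subseq_diagonal_rest)
    then obtain L where 3: "(\<lambda>na. x (d (na + Suc n)) n) \<longlonglongrightarrow> L"
      by (auto simp: add.commute dest: convergentD)
    then have "(\<lambda>k. x (d k) n) \<longlonglongrightarrow> L"
      by (rule LIMSEQ_offset)
    then show ?thesis
      by (auto simp: convergent_def)
  qed
  show ?thesis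
    apply (rule exI[of _ d], rule exI[of _ "\<lambda>j. lim (\<lambda>k. x (d k) j)"])
    using subseq cnv by (simp add: convergent_LIMSEQ_iff)
qed



section \<open>Compactness of block operators\<close>

definition evan :: "op \<Rightarrow> bool" where
  "evan T \<longleftrightarrow> (\<forall>\<epsilon>>0. \<exists>N. \<forall>j i. N \<le> j \<longrightarrow> cmod (ent T j i) < \<epsilon>)"

lemma evan_compact:
  assumes T: "T \<in> A0" and ev: "evan T"
  shows "compact_op T"
  unfolding compact_op_def
proof (intro conjI allI impI)
  show TB: "T \<in> Bop" using T by (rule A0_Bop)
  define E where "E = ent T"
  have Teq: "T = blockop E" unfolding E_def by (rule A0_matrix[OF T])
  obtain K where K: "\<And>j i. cmod (E j i) \<le> K" using A0_ent_bound[OF TB] unfolding E_def by blast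
  have K0: "0 \<le> K" using order_trans[OF norm_ge_zero K[of 0 0]] .
  fix x :: "nat \<Rightarrow> nat \<Rightarrow> complex"
  assume "(\<forall>n. x n \<in> ell2) \<and> (\<exists>B. \<forall>n. l2norm (x n) \<le> B)"
  then obtain B where xin: "\<And>n. x n \<in> ell2" and xB: "\<And>n. l2norm (x n) \<le> B" by blast
  have B0: "0 \<le> B" using l2norm_nonneg[OF xin[of 0]] xB[of 0] by simp
  have cb: "cmod (x n j) \<le> B" for n j using order_trans[OF coord_le[OF xin] xB] .
  obtain r z where r: "strict_mono r" and z: "\<And>j. (\<lambda>k. x (r k) j) \<longlonglongrightarrow> z j"
    using diag_subseq[of x B, OF cb] by blast
  have zps: "(\<Sum>j<N. (cmod (z j))\<^sup>2) \<le> B\<^sup>2" for N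
  proof -
    have "(\<lambda>k. \<Sum>j<N. (cmod (x (r k) j))\<^sup>2) \<longlonglongrightarrow> (\<Sum>j<N. (cmod (z j))\<^sup>2)"
      by (intro tendsto_intros z)
    moreover have "(\<Sum>j<N. (cmod (x (r k) j))\<^sup>2) \<le> B\<^sup>2" for k
    proof -
      have "(\<Sum>j<N. (cmod (x (r k) j))\<^sup>2) \<le> (l2norm (x (r k)))\<^sup>2" by (rule psum_le[OF _ xin]) simp
      also have "\<dots> \<le> B\<^sup>2" using xB l2norm_nonneg[OF xin] by (simp add: power_mono)
      finally show ?thesis .
    qed
    ultimately show ?thesis by (intro LIMSEQ_le_const2) auto
  qed
  have zin: "z \<in> ell2" by (rule ell2I(1)[OF zps])
  have zB: "l2norm z \<le> B" using ell2I(2)[OF zps] B0 by simp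
  define w where "w k = vsub (x (r k)) z" for k
  have win: "w k \<in> ell2" for k unfolding w_def by (rule ell2_vsub[OF xin zin])
  have wB: "(l2norm (w k))\<^sup>2 \<le> 4 * B\<^sup>2" for k
  proof -
    have "(l2norm (w k))\<^sup>2 \<le> 2 * (l2norm (x (r k)))\<^sup>2 + 2 * (l2norm z)\<^sup>2"
      unfolding w_def by (rule l2norm_vsub_sq[OF xin zin])
    also have "\<dots> \<le> 2 * B\<^sup>2 + 2 * B\<^sup>2"
      using xB l2norm_nonneg[OF xin] zB l2norm_nonneg[OF zin]
      by (intro add_mono mult_left_mono power_mono) auto
    finally show ?thesis by simp
  qed
  have wj: "(\<lambda>k. w k j) \<longlonglongrightarrow> 0" for j
  proof -
    have "(\<lambda>k. x (r k) j - z j) \<longlonglongrightarrow> z j - z j" by (intro tendsto_intros z)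
    then show ?thesis by (simp add: w_def vsub_def)
  qed
  have yin: "T z \<in> ell2" by (rule bop_ell2[OF TB zin])
  have diff: "vsub (T (x (r k))) (T z) = blockop E (w k)" for k
    using xin zin win unfolding Teq by (auto simp: blockop_def w_def vsub_def algebra_simps)
  have "(\<lambda>k. l2norm (blockop E (w k))) \<longlonglongrightarrow> 0"
  proof (rule LIMSEQ_I)
    fix \<epsilon> :: real assume e: "0 < \<epsilon>"
    define \<delta> where "\<delta> = \<epsilon> / (8 * (B + 1))"
    have d0: "0 < \<delta>" using e B0 by (simp add: \<delta>_def)
    obtain N0 where N0: "\<And>j i. N0 \<le> j \<Longrightarrow> cmod (ent T j i) < \<delta>" using ev d0 unfolding evan_def by blast
    define Kn where "Kn n = (if n < N0 then K else \<delta>)" for n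
    have EKn: "cmod (E j i) \<le> Kn (j div 2)" for j i
    proof (cases "j div 2 < N0")
      case True then show ?thesis using K by (simp add: Kn_def)
    next
      case False
      then have "N0 \<le> j" by linarith
      then show ?thesis using N0[of j i] False by (simp add: Kn_def E_def)
    qed
    define S where "S k = (\<Sum>j<2*N0. (cmod (w k j))\<^sup>2)" for k
    have S0: "(\<lambda>k. 4 * K\<^sup>2 * S k) \<longlonglongrightarrow> 4 * K\<^sup>2 * (\<Sum>j<2*N0. (cmod (0::complex))\<^sup>2)"
      unfolding S_def by (intro tendsto_intros wj)
    have "\<forall>\<^sub>F k in sequentially. 4 * K\<^sup>2 * S k < \<epsilon>\<^sup>2 / 2"
      by (rule order_tendstoD(2)[OF S0]) (use e in simp)
    then obtain k0 where k0: "\<And>k. k0 \<le> k \<Longrightarrow> 4 * K\<^sup>2 * S k < \<epsilon>\<^sup>2 / 2"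
      unfolding eventually_sequentially by blast
    have dB: "16 * \<delta>\<^sup>2 * B\<^sup>2 \<le> \<epsilon>\<^sup>2 / 4"
    proof -
      have "4 * \<delta> * B \<le> \<epsilon> / 2"
        using e B0 by (simp add: \<delta>_def field_simps)
      moreover have "0 \<le> 4 * \<delta> * B" using d0 B0 by simp
      ultimately have "(4 * \<delta> * B)\<^sup>2 \<le> (\<epsilon> / 2)\<^sup>2" by (rule power_mono)
      then show ?thesis by (simp add: power_mult_distrib power_divide)
    qed
    show "\<exists>no. \<forall>k\<ge>no. norm (l2norm (blockop E (w k)) - 0) < \<epsilon>"
    proof (intro exI allI impI)
      fix k assume "k0 \<le> k"
      have ps: "(\<Sum>j<M. (cmod (blockop E (w k) j))\<^sup>2) \<le> 4 * K\<^sup>2 * S k + 16 * \<delta>\<^sup>2 * B\<^sup>2" for M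
      proof -
        let ?h = "\<lambda>n. (cmod (w k (2*n)))\<^sup>2 + (cmod (w k (2*n+1)))\<^sup>2"
        have "(\<Sum>j<M. (cmod (blockop E (w k) j))\<^sup>2) \<le> (\<Sum>j<2*(M+N0). (cmod (blockop E (w k) j))\<^sup>2)"
          by (rule sum_mono2) auto
        also have "\<dots> \<le> (\<Sum>n<M+N0. 4 * (Kn n)\<^sup>2 * ?h n)"
          by (rule bo_psum[of "w k" E Kn, OF win EKn])
        also have "\<dots> = (\<Sum>n<N0. 4 * (Kn n)\<^sup>2 * ?h n) + (\<Sum>n\<in>{N0..<M+N0}. 4 * (Kn n)\<^sup>2 * ?h n)"
          using sum.atLeastLessThan_concat[of 0 N0 "M+N0" "\<lambda>n. 4 * (Kn n)\<^sup>2 * ?h n"]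
          by (simp add: atLeast0LessThan)
        also have "(\<Sum>n<N0. 4 * (Kn n)\<^sup>2 * ?h n) = 4 * K\<^sup>2 * S k"
          by (simp add: Kn_def S_def pair_sum sum_distrib_left)
        also have "(\<Sum>n\<in>{N0..<M+N0}. 4 * (Kn n)\<^sup>2 * ?h n) \<le> (\<Sum>n<M+N0. 4 * \<delta>\<^sup>2 * ?h n)"
          by (rule order_trans[OF _ sum_mono2[of "{..<M+N0}"]]) (auto simp: Kn_def)
        also have "\<dots> = 4 * \<delta>\<^sup>2 * (\<Sum>j<2*(M+N0). (cmod (w k j))\<^sup>2)"
          unfolding pair_sum by (simp add: sum_distrib_left)
        also have "\<dots> \<le> 4 * \<delta>\<^sup>2 * (4 * B\<^sup>2)"
          using psum_le[OF _ win, of "{..<2*(M+N0)}" k] wB[of k] by (intro mult_left_mono) auto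
        finally show ?thesis by simp
      qed
      have "l2norm (blockop E (w k)) \<le> sqrt (4 * K\<^sup>2 * S k + 16 * \<delta>\<^sup>2 * B\<^sup>2)"
        by (rule ell2I(2)[OF ps])
      also have "\<dots> < sqrt (\<epsilon>\<^sup>2)"
        using k0[OF \<open>k0 \<le> k\<close>] dB zero_less_power[OF e, of 2] by (intro real_sqrt_less_mono) linarith
      also have "\<dots> = \<epsilon>" using e by simp
      finally show "norm (l2norm (blockop E (w k)) - 0) < \<epsilon>"
        using l2norm_nonneg[OF bo_norm(1)[OF win K]] by simp
    qed
  qed
  then show "\<exists>r y. strict_mono r \<and> y \<in> ell2 \<and> (\<lambda>n. l2norm (vsub (T (x (r n))) y)) \<longlonglongrightarrow> 0"
    using r yin diff by (intro exI[of _ r] exI[of _ "T z"]) simp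
qed


lemma compact_basis_tendsto:
  assumes T: "T \<in> A0" and c: "compact_op T"
  shows "(\<lambda>m. l2norm (T (basis_vec m))) \<longlonglongrightarrow> 0"
proof (rule ccontr)
  have TB: "T \<in> Bop" using T by (rule A0_Bop)
  assume nt: "\<not> ?thesis"
  have "\<exists>\<epsilon>>0. \<forall>N. \<exists>m\<ge>N. \<epsilon> \<le> l2norm (T (basis_vec m))"
  proof (rule ccontr)
    assume "\<not> (\<exists>\<epsilon>>0. \<forall>N. \<exists>m\<ge>N. \<epsilon> \<le> l2norm (T (basis_vec m)))"
    then have h: "\<And>\<epsilon>. 0 < \<epsilon> \<Longrightarrow> \<exists>N. \<forall>m\<ge>N. l2norm (T (basis_vec m)) < \<epsilon>"
      by (simp add: not_le) (meson not_le)
    have "(\<lambda>m. l2norm (T (basis_vec m))) \<longlonglongrightarrow> 0"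
    proof (rule LIMSEQ_I)
      fix r :: real assume "0 < r"
      then obtain N where "\<forall>m\<ge>N. l2norm (T (basis_vec m)) < r" using h by blast
      then show "\<exists>no. \<forall>n\<ge>no. norm (l2norm (T (basis_vec n)) - 0) < r"
        using l2norm_nonneg[OF bop_ell2[OF TB basis_in]] by auto
    qed
    then show False using nt by simp
  qed
  then obtain \<epsilon> where e: "0 < \<epsilon>" and unb: "\<And>N. \<exists>m\<ge>N. \<epsilon> \<le> l2norm (T (basis_vec m))"
    by blast
  define A where "A = {m. \<epsilon> \<le> l2norm (T (basis_vec m))}"
  have infA: "infinite A" unfolding A_def infinite_nat_iff_unbounded_le using unb by auto
  define s where "s = enumerate A"
  have s: "strict_mono s" unfolding s_def by (rule strict_mono_enumerate[OF infA])
  have sA: "\<epsilon> \<le> l2norm (T (basis_vec (s k)))" for k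
    using enumerate_in_set[OF infA, of k] unfolding s_def A_def by simp
  obtain r y where r: "strict_mono r" and yin: "y \<in> ell2"
    and lim: "(\<lambda>n. l2norm (vsub (T (basis_vec (s (r n)))) y)) \<longlonglongrightarrow> 0"
  proof -
    have "(\<forall>n. basis_vec (s n) \<in> ell2) \<and> (\<exists>B. \<forall>n. l2norm (basis_vec (s n)) \<le> B)" by auto
    from c[unfolded compact_op_def, THEN conjunct2, rule_format, OF this] that show ?thesis by blast
  qed
  have y0: "y j = 0" for j
  proof -
    have ev: "T (basis_vec (s (r n))) j = 0" if "j + 2 \<le> n" for n
    proof -
      have "n \<le> (s \<circ> r) n" using strict_mono_o[OF s r] by (rule seq_suble)
      then have "n \<le> s (r n)" by simp
      then have "s (r n) div 2 \<noteq> j div 2" using that by linarith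
      then show ?thesis using A0_ent[OF T, of j "s (r n)"] by (auto simp: ent_def)
    qed
    have "cmod (y j) \<le> l2norm (vsub (T (basis_vec (s (r n)))) y)" if "j + 2 \<le> n" for n
    proof -
      have "cmod (y j) = cmod (vsub (T (basis_vec (s (r n)))) y j)" using ev[OF that] by (simp add: vsub_def)
      also have "\<dots> \<le> l2norm (vsub (T (basis_vec (s (r n)))) y)"
        by (rule coord_le[OF ell2_vsub[OF bop_ell2[OF TB basis_in] yin]])
      finally show ?thesis .
    qed
    then have "cmod (y j) \<le> 0" by (intro LIMSEQ_le_const[OF lim]) auto
    then show ?thesis by simp
  qed
  then have "y = (\<lambda>j. 0)" by auto
  then have "(\<lambda>n. l2norm (T (basis_vec (s (r n))))) \<longlonglongrightarrow> 0"
    using lim by (simp add: vsub_def)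
  moreover have "\<epsilon> \<le> l2norm (T (basis_vec (s (r n))))" for n by (rule sA)
  ultimately have "\<epsilon> \<le> 0" by (intro LIMSEQ_le_const) auto
  then show False using e by simp
qed

lemma compact_evan:
  assumes T: "T \<in> A0" and c: "compact_op T"
  shows "evan T"
  unfolding evan_def
proof (intro allI impI)
  fix \<epsilon> :: real assume e: "0 < \<epsilon>"
  have TB: "T \<in> Bop" using T by (rule A0_Bop)
  obtain N where N: "\<And>m. N \<le> m \<Longrightarrow> norm (l2norm (T (basis_vec m)) - 0) < \<epsilon>"
    using compact_basis_tendsto[OF T c] e unfolding LIMSEQ_iff by blast
  show "\<exists>N. \<forall>j i. N \<le> j \<longrightarrow> cmod (ent T j i) < \<epsilon>"
  proof (intro exI allI impI)
    fix j i assume j: "N + 2 \<le> j"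
    show "cmod (ent T j i) < \<epsilon>"
    proof (cases "ent T j i = 0")
      case True then show ?thesis using e by simp
    next
      case False
      then have "i div 2 = j div 2" by (rule A0_ent[OF T])
      then have "N \<le> i" using j by linarith
      then have "l2norm (T (basis_vec i)) < \<epsilon>" using N[of i] by simp
      moreover have "cmod (ent T j i) \<le> l2norm (T (basis_vec i))"
        unfolding ent_def by (rule coord_le[OF bop_ell2[OF TB basis_in]])
      ultimately show ?thesis by simp
    qed
  qed
qed


definition fco :: "real \<Rightarrow> nat \<Rightarrow> nat \<Rightarrow> complex" where
  "fco a k u = (if k = 0 then (if u = 0 then of_real a else of_real (sqrt (1 - a\<^sup>2)))
                else (if u = 0 then of_real (sqrt (1 - a\<^sup>2)) else - of_real a))"

definition gm :: "real \<Rightarrow> (nat \<Rightarrow> nat \<Rightarrow> complex) \<Rightarrow> nat \<Rightarrow> nat \<Rightarrow> complex" where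
  "gm a M k l = (\<Sum>u<2. \<Sum>v<2. fco a k u * M u v * fco a l v)"

lemma sum2: "(\<Sum>u<(2::nat). f u) = f 0 + f 1"
  by (simp add: numeral_2_eq_2)

lemma less2: "(u::nat) < 2 \<longleftrightarrow> u = 0 \<or> u = 1" by auto

lemma orth: assumes "\<bar>a\<bar> \<le> 1"
  shows "(complex_of_real a)\<^sup>2 + (complex_of_real (sqrt (1 - a\<^sup>2)))\<^sup>2 = 1"
proof -
  have "a\<^sup>2 \<le> 1" using assms by (simp add: abs_square_le_1)
  then have "(sqrt (1 - a\<^sup>2))\<^sup>2 = 1 - a\<^sup>2" by simp
  then have "a\<^sup>2 + (sqrt (1 - a\<^sup>2))\<^sup>2 = 1" by simp
  then have "complex_of_real (a\<^sup>2 + (sqrt (1 - a\<^sup>2))\<^sup>2) = 1" by simp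
  then show ?thesis by simp
qed

lemma gm_inv:
  assumes a: "\<bar>a\<bar> \<le> 1" and uv: "u < 2" "v < 2"
  shows "M u v = (\<Sum>k<2. \<Sum>l<2. fco a k u * gm a M k l * fco a l v)"
proof -
  define c where "c = complex_of_real a"
  define d where "d = complex_of_real (sqrt (1 - a\<^sup>2))"
  have o: "c\<^sup>2 + d\<^sup>2 = 1" using orth[OF a] by (simp add: c_def d_def)
  show ?thesis using uv o unfolding less2
    apply (elim disjE; hypsubst_thin)
    apply (simp_all add: sum2 gm_def fco_def flip: c_def d_def)
    by algebra+
qed

lemma gm_mult:
  assumes a: "\<bar>a\<bar> \<le> 1" and kl: "k < 2" "l < 2"
  shows "gm a (\<lambda>u v. \<Sum>w<2. M u w * N w v) k l = (\<Sum>m<2. gm a M k m * gm a N m l)"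
proof -
  define c where "c = complex_of_real a"
  define d where "d = complex_of_real (sqrt (1 - a\<^sup>2))"
  have o: "c\<^sup>2 + d\<^sup>2 = 1" using orth[OF a] by (simp add: c_def d_def)
  show ?thesis using kl o unfolding less2
    apply (elim disjE; hypsubst_thin)
    apply (simp_all add: sum2 gm_def fco_def flip: c_def d_def)
    by algebra+
qed

lemma fco_bound: assumes "\<bar>a\<bar> \<le> 1" shows "cmod (fco a k u) \<le> 1"
proof -
  have "a\<^sup>2 \<le> 1" using assms by (simp add: abs_square_le_1)
  then have "sqrt (1 - a\<^sup>2) \<le> 1" by simp
  moreover have "0 \<le> sqrt (1 - a\<^sup>2)" using \<open>a\<^sup>2 \<le> 1\<close> by simp
  ultimately have "\<bar>sqrt (1 - a\<^sup>2)\<bar> \<le> 1" by simp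
  then show ?thesis using assms by (auto simp: fco_def)
qed


lemma div2_simps[simp]: "(2*m) div 2 = (m::nat)" "(2*m+1) div 2 = m" "Suc (2*m) div 2 = m"
  by auto

lemma div2_lt: "u < 2 \<Longrightarrow> (2*n + u) div 2 = (n::nat)" by auto

lemma blockop_zero_vec[simp]: "blockop E (\<lambda>j. 0) = (\<lambda>j. 0)"
  by (simp add: blockop_def)

lemma op_add_blockop: "op_add (blockop E) (blockop F) = blockop (\<lambda>j i. E j i + F j i)"
  by (rule ext) (auto simp: op_add_def blockop_def vadd_def algebra_simps)

lemma op_sub_blockop: "op_sub (blockop E) (blockop F) = blockop (\<lambda>j i. E j i - F j i)"
  by (rule ext) (auto simp: op_sub_def blockop_def vsub_def algebra_simps)

lemma op_scale_blockop: "op_scale c (blockop E) = blockop (\<lambda>j i. c * E j i)"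
  by (rule ext) (auto simp: op_scale_def blockop_def vscale_def algebra_simps)

definition matmul :: "(nat \<Rightarrow> nat \<Rightarrow> complex) \<Rightarrow> (nat \<Rightarrow> nat \<Rightarrow> complex) \<Rightarrow> nat \<Rightarrow> nat \<Rightarrow> complex" where
  "matmul E F j i = E j (2*(j div 2)) * F (2*(j div 2)) i + E j (2*(j div 2)+1) * F (2*(j div 2)+1) i"

lemma op_mult_blockop:
  assumes F: "\<And>j i. cmod (F j i) \<le> K"
  shows "op_mult (blockop E) (blockop F) = blockop (matmul E F)"
proof
  fix x
  show "op_mult (blockop E) (blockop F) x = blockop (matmul E F) x"
  proof (cases "x \<in> ell2")
    case True
    then have "blockop F x \<in> ell2" by (rule bo_norm(1)[OF _ F])
    then show ?thesis using True
      by (auto simp: op_mult_def blockop_def matmul_def algebra_simps)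
  next
    case False
    then show ?thesis by (simp add: op_mult_def blockop_def)
  qed
qed

lemma matmul_bound:
  assumes "\<And>j i. cmod (E j i) \<le> K1" "\<And>j i. cmod (F j i) \<le> K2"
  shows "cmod (matmul E F j i) \<le> 2 * K1 * K2"
proof -
  have K: "0 \<le> K1" "0 \<le> K2" using order_trans[OF norm_ge_zero assms(1)[of 0 0]]
      order_trans[OF norm_ge_zero assms(2)[of 0 0]] by auto
  have "cmod (matmul E F j i) \<le> cmod (E j (2*(j div 2)) * F (2*(j div 2)) i) + cmod (E j (2*(j div 2)+1) * F (2*(j div 2)+1) i)"
    unfolding matmul_def by (rule norm_triangle_ineq)
  also have "\<dots> \<le> K1 * K2 + K1 * K2"
    unfolding norm_mult using assms K by (intro add_mono mult_mono) auto
  finally show ?thesis by simp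
qed

lemma ent_add: "ent (op_add T S) j i = ent T j i + ent S j i"
  by (simp add: ent_def op_add_def vadd_def)
lemma ent_sub: "ent (op_sub T S) j i = ent T j i - ent S j i"
  by (simp add: ent_def op_sub_def vsub_def)
lemma ent_scale: "ent (op_scale c T) j i = c * ent T j i"
  by (simp add: ent_def op_scale_def vscale_def)

lemma A0_bound: assumes "T \<in> A0" obtains K where "\<And>j i. cmod (ent T j i) \<le> K"
  using A0_ent_bound[OF A0_Bop[OF assms]] by blast

lemma A0_add: assumes "T \<in> A0" "S \<in> A0" shows "op_add T S \<in> A0"
proof -
  obtain K1 where K1: "\<And>j i. cmod (ent T j i) \<le> K1" using A0_bound[OF assms(1)] by blast
  obtain K2 where K2: "\<And>j i. cmod (ent S j i) \<le> K2" using A0_bound[OF assms(2)] by blast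
  have b: "cmod (ent T j i + ent S j i) \<le> K1 + K2" for j i
    by (rule order_trans[OF norm_triangle_ineq add_mono[OF K1 K2]])
  have "op_add T S = op_add (blockop (ent T)) (blockop (ent S))"
    by (rule arg_cong2[where f=op_add, OF A0_matrix[OF assms(1)] A0_matrix[OF assms(2)]])
  also have "\<dots> = blockop (\<lambda>j i. ent T j i + ent S j i)" by (rule op_add_blockop)
  finally show ?thesis using blockop_A0[OF b] by simp
qed

lemma A0_sub: assumes "T \<in> A0" "S \<in> A0" shows "op_sub T S \<in> A0"
proof -
  obtain K1 where K1: "\<And>j i. cmod (ent T j i) \<le> K1" using A0_bound[OF assms(1)] by blast
  obtain K2 where K2: "\<And>j i. cmod (ent S j i) \<le> K2" using A0_bound[OF assms(2)] by blast
  have b: "cmod (ent T j i - ent S j i) \<le> K1 + K2" for j i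
    by (rule order_trans[OF norm_triangle_ineq4 add_mono[OF K1 K2]])
  have "op_sub T S = op_sub (blockop (ent T)) (blockop (ent S))"
    by (rule arg_cong2[where f=op_sub, OF A0_matrix[OF assms(1)] A0_matrix[OF assms(2)]])
  also have "\<dots> = blockop (\<lambda>j i. ent T j i - ent S j i)" by (rule op_sub_blockop)
  finally show ?thesis using blockop_A0[OF b] by simp
qed

lemma A0_scale: assumes "T \<in> A0" shows "op_scale c T \<in> A0"
proof -
  obtain K where K: "\<And>j i. cmod (ent T j i) \<le> K" using A0_bound[OF assms(1)] by blast
  have b: "cmod (c * ent T j i) \<le> cmod c * K" for j i
    unfolding norm_mult using K by (intro mult_left_mono) auto
  have "op_scale c T = op_scale c (blockop (ent T))"
    by (rule arg_cong[where f="op_scale c", OF A0_matrix[OF assms(1)]])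
  also have "\<dots> = blockop (\<lambda>j i. c * ent T j i)" by (rule op_scale_blockop)
  finally show ?thesis using blockop_A0[OF b] by simp
qed

lemma A0_mult_eq: assumes "T \<in> A0" "S \<in> A0" shows "op_mult T S = blockop (matmul (ent T) (ent S))"
proof -
  obtain K2 where K2: "\<And>j i. cmod (ent S j i) \<le> K2" using A0_bound[OF assms(2)] by blast
  have "op_mult T S = op_mult (blockop (ent T)) (blockop (ent S))"
    by (rule arg_cong2[where f=op_mult, OF A0_matrix[OF assms(1)] A0_matrix[OF assms(2)]])
  also have "\<dots> = blockop (matmul (ent T) (ent S))" by (rule op_mult_blockop[OF K2])
  finally show ?thesis .
qed

lemma A0_mult: assumes "T \<in> A0" "S \<in> A0" shows "op_mult T S \<in> A0"
proof -
  obtain K1 where K1: "\<And>j i. cmod (ent T j i) \<le> K1" using A0_bound[OF assms(1)] by blast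
  obtain K2 where K2: "\<And>j i. cmod (ent S j i) \<le> K2" using A0_bound[OF assms(2)] by blast
  show ?thesis unfolding A0_mult_eq[OF assms] by (rule blockop_A0[OF matmul_bound[OF K1 K2]])
qed

lemma ent_mult: assumes "T \<in> A0" "S \<in> A0"
  shows "ent (op_mult T S) j i = (if i div 2 = j div 2 then matmul (ent T) (ent S) j i else 0)"
  unfolding A0_mult_eq[OF assms] by (rule ent_blockop)

lemma prod3_le: "0 \<le> (x::real) \<Longrightarrow> x \<le> 1 \<Longrightarrow> 0 \<le> y \<Longrightarrow> y \<le> K \<Longrightarrow> 0 \<le> z \<Longrightarrow> z \<le> 1 \<Longrightarrow> x * y * z \<le> K"
proof -
  assume h: "0 \<le> x" "x \<le> 1" "0 \<le> y" "y \<le> K" "0 \<le> z" "z \<le> 1"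
  have "x * y \<le> 1 * K" by (rule mult_mono) (use h in auto)
  then have "x * y * z \<le> K * 1" by (intro mult_mono) (use h in auto)
  then show ?thesis by simp
qed

section \<open>Block coefficients in the rotated basis\<close>

definition bm :: "op \<Rightarrow> nat \<Rightarrow> nat \<Rightarrow> nat \<Rightarrow> complex" where
  "bm T n u v = ent T (2*n+u) (2*n+v)"

definition gT :: "real \<Rightarrow> op \<Rightarrow> nat \<Rightarrow> nat \<Rightarrow> nat \<Rightarrow> complex" where
  "gT a T n = gm a (bm T n)"

lemma gm_cong: "(\<And>u v. u < 2 \<Longrightarrow> v < 2 \<Longrightarrow> M u v = N u v) \<Longrightarrow> gm a M k l = gm a N k l"
  unfolding gm_def by (intro sum.cong refl) auto

lemma gT_add: "gT a (op_add T S) n k l = gT a T n k l + gT a S n k l"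
  by (simp add: gT_def gm_def bm_def ent_add sum2 algebra_simps)
lemma gT_sub: "gT a (op_sub T S) n k l = gT a T n k l - gT a S n k l"
  by (simp add: gT_def gm_def bm_def ent_sub sum2 algebra_simps)
lemma gT_scale: "gT a (op_scale c T) n k l = c * gT a T n k l"
  by (simp add: gT_def gm_def bm_def ent_scale sum2 algebra_simps)

lemma bm_mult: assumes "T \<in> A0" "S \<in> A0" "u < 2" "v < 2"
  shows "bm (op_mult T S) n u v = (\<Sum>w<2. bm T n u w * bm S n w v)"
  using assms(3,4) unfolding less2
  by (auto simp: bm_def ent_mult[OF assms(1,2)] matmul_def sum2)

lemma gT_mult: assumes "T \<in> A0" "S \<in> A0" "\<bar>a\<bar> \<le> 1" "k < 2" "l < 2"
  shows "gT a (op_mult T S) n k l = (\<Sum>m<2. gT a T n k m * gT a S n m l)"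
proof -
  have "gT a (op_mult T S) n k l = gm a (\<lambda>u v. \<Sum>w<2. bm T n u w * bm S n w v) k l"
    unfolding gT_def by (rule gm_cong) (rule bm_mult[OF assms(1,2)])
  also have "\<dots> = (\<Sum>m<2. gT a T n k m * gT a S n m l)"
    unfolding gT_def by (rule gm_mult[OF assms(3-5)])
  finally show ?thesis .
qed

lemma gm_bound: assumes "\<bar>a\<bar> \<le> 1" "\<And>u v. u < 2 \<Longrightarrow> v < 2 \<Longrightarrow> cmod (M u v) \<le> K"
  shows "cmod (gm a M k l) \<le> 4 * K"
proof -
  have "cmod (gm a M k l) \<le> (\<Sum>u<2. \<Sum>v<2. cmod (fco a k u * M u v * fco a l v))"
    unfolding gm_def by (rule order_trans[OF norm_sum sum_mono[OF norm_sum]])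
  also have "\<dots> \<le> (\<Sum>u<(2::nat). \<Sum>v<(2::nat). K)"
  proof (intro sum_mono)
    fix u v :: nat assume "u \<in> {..<2}" "v \<in> {..<2}"
    then show "cmod (fco a k u * M u v * fco a l v) \<le> K"
      unfolding norm_mult using fco_bound[OF assms(1)] assms(2)[of u v] \<open>u \<in> {..<2}\<close> \<open>v \<in> {..<2}\<close>
      by (intro prod3_le) auto
  qed
  finally show ?thesis by simp
qed

lemma gT_bound: assumes "\<bar>a\<bar> \<le> 1" "\<And>j i. cmod (ent T j i) \<le> K"
  shows "cmod (gT a T n k l) \<le> 4 * K"
  unfolding gT_def by (rule gm_bound[OF assms(1)]) (simp add: bm_def assms(2))

lemma ent_from_gT: assumes "\<bar>a\<bar> \<le> 1" "u < 2" "v < 2"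
  shows "ent T (2*n+u) (2*n+v) = (\<Sum>k<2. \<Sum>l<2. fco a k u * gT a T n k l * fco a l v)"
  using gm_inv[OF assms, of "bm T n"] by (simp add: bm_def gT_def)

lemma ent_gT_bound: assumes "\<bar>a\<bar> \<le> 1" "u < 2" "v < 2" "\<And>k l. k < 2 \<Longrightarrow> l < 2 \<Longrightarrow> cmod (gT a T n k l) \<le> K"
  shows "cmod (ent T (2*n+u) (2*n+v)) \<le> 4 * K"
proof -
  have "cmod (ent T (2*n+u) (2*n+v)) \<le> (\<Sum>k<2. \<Sum>l<2. cmod (fco a k u * gT a T n k l * fco a l v))"
    unfolding ent_from_gT[OF assms(1-3)] by (rule order_trans[OF norm_sum sum_mono[OF norm_sum]])
  also have "\<dots> \<le> (\<Sum>k<(2::nat). \<Sum>l<(2::nat). K)"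
  proof (intro sum_mono)
    fix k l :: nat assume "k \<in> {..<2}" "l \<in> {..<2}"
    then show "cmod (fco a k u * gT a T n k l * fco a l v) \<le> K"
      unfolding norm_mult using fco_bound[OF assms(1)] assms(4)[of k l] \<open>k \<in> {..<2}\<close> \<open>l \<in> {..<2}\<close>
      by (intro prod3_le) auto
  qed
  finally show ?thesis by simp
qed

lemma evan_gT: assumes "evan T" "\<bar>a\<bar> \<le> 1" "0 < \<epsilon>"
  shows "\<exists>N. \<forall>n\<ge>N. \<forall>k l. cmod (gT a T n k l) < \<epsilon>"
proof -
  have "0 < \<epsilon> / 8" using assms(3) by simp
  from assms(1)[unfolded evan_def, rule_format, OF this]
  obtain N where N: "\<And>j i. N \<le> j \<Longrightarrow> cmod (ent T j i) < \<epsilon> / 8" by blast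
  have "cmod (gT a T n k l) < \<epsilon>" if "N \<le> n" for n k l
  proof -
    have "cmod (gT a T n k l) \<le> 4 * (\<epsilon> / 8)"
      unfolding gT_def by (rule gm_bound[OF assms(2)]) (use N that in \<open>auto simp: bm_def intro: less_imp_le\<close>)
    then show ?thesis using assms(3) by simp
  qed
  then show ?thesis by blast
qed


lemma div2_iff: "(j::nat) div 2 = n \<longleftrightarrow> j = 2*n \<or> j = 2*n+1" by presburger

lemma mod2_simps[simp]: "Suc (n*2) mod 2 = 1" "Suc (2*n) mod 2 = 1" "(n*2) mod 2 = (0::nat)" "(2*n+1) mod 2 = 1" "(n*2+1) mod 2 = 1"
  by presburger+

lemma fvec0_eq: "fvec0 a n = (\<lambda>j. if j div 2 = n then fco a 0 (j mod 2) else 0)"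
  by (rule ext) (auto simp: fvec0_def vadd_def vscale_def basis_vec_def fco_def div2_iff)

lemma fvec1_eq: "fvec1 a n = (\<lambda>j. if j div 2 = n then fco a 1 (j mod 2) else 0)"
  by (rule ext) (auto simp: fvec1_def vsub_def vscale_def basis_vec_def fco_def div2_iff)

lemma fvec_in: "(\<lambda>j. if j div 2 = n then f j else 0) \<in> ell2"
  by (rule ell2_finite[of "2*n+2"]) auto

lemma fco_orth: assumes "\<bar>a\<bar> \<le> 1" "k < 2" "l < 2"
  shows "fco a k 0 * fco a l 0 + fco a k 1 * fco a l 1 = (if k = l then 1 else 0)"
proof -
  have o: "(complex_of_real a)\<^sup>2 + (complex_of_real (sqrt (1 - a\<^sup>2)))\<^sup>2 = 1" by (rule orth[OF assms(1)])
  show ?thesis using assms(2,3) o unfolding less2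
    by (auto simp: fco_def power2_eq_square algebra_simps)
qed

lemma blockop_cong: "(\<And>j i. i div 2 = j div 2 \<Longrightarrow> E j i = F j i) \<Longrightarrow> blockop E = blockop F"
  unfolding blockop_def by (intro ext) auto

lemma blockop_on:
  assumes E: "\<And>j i. j div 2 \<notin> X \<Longrightarrow> E j i = 0" and x: "x \<in> Hblock n" and n: "n \<notin> X"
  shows "blockop E x = (\<lambda>j. 0)"
proof -
  have xz: "x j = 0" if "j div 2 \<noteq> n" for j using x that by (auto simp: Hblock_def div2_iff)
  have "x \<in> ell2" by (rule ell2_finite[of "2*n+2"]) (use xz in auto)
  moreover have "E j (2 * (j div 2)) * x (2 * (j div 2)) + E j (2 * (j div 2) + 1) * x (2 * (j div 2) + 1) = 0" for j
  proof (cases "j div 2 \<in> X")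
    case True
    then have "j div 2 \<noteq> n" using n by auto
    then show ?thesis using xz[of "2 * (j div 2)"] xz[of "2 * (j div 2) + 1"] by simp
  next
    case False then show ?thesis by (simp add: E)
  qed
  ultimately show ?thesis unfolding blockop_def by auto
qed

lemma blockop_A0_on:
  assumes E: "\<And>j i. j div 2 \<notin> X \<Longrightarrow> E j i = 0" and K: "\<And>j i. cmod (E j i) \<le> K"
  shows "blockop E \<in> A0_on X"
  unfolding A0_on_def using blockop_A0[OF K] blockop_on[OF E] by auto

lemma proj_basis: "proj X (basis_vec i) = (if i div 2 \<in> X then basis_vec i else (\<lambda>j. 0))"
proof -
  have "basis_vec i \<in> ell2" by simp
  then show ?thesis unfolding proj_def by (auto intro!: ext simp: basis_vec_def)
qed

lemma proj_vec: "x \<in> ell2 \<Longrightarrow> proj X x j = (if j div 2 \<in> X then x j else 0)"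
  by (simp add: proj_def)

lemma ent_PTP: assumes T: "T \<in> Bop"
  shows "ent (op_mult (proj X) (op_mult T (proj X))) j i = (if j div 2 \<in> X \<and> i div 2 \<in> X then ent T j i else 0)"
proof (cases "i div 2 \<in> X")
  case True
  have "T (basis_vec i) \<in> ell2" by (rule bop_ell2[OF T basis_in])
  then show ?thesis using True unfolding ent_def op_mult_def proj_basis by (simp add: proj_vec)
next
  case False
  then show ?thesis unfolding ent_def op_mult_def proj_basis by (simp add: proj_vec bop_zero[OF T])
qed

definition offc :: "real \<Rightarrow> nat set \<Rightarrow> op \<Rightarrow> bool" where
  "offc a X T \<longleftrightarrow> (\<forall>\<epsilon>>0. \<exists>N. \<forall>n\<in>X. N \<le> n \<longrightarrow> cmod (gT a T n 0 1) < \<epsilon> \<and> cmod (gT a T n 1 0) < \<epsilon>)"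

lemma gT_PTP: assumes "T \<in> Bop" "n \<in> X"
  shows "gT a (op_mult (proj X) (op_mult T (proj X))) n k l = gT a T n k l"
  unfolding gT_def by (rule gm_cong) (use assms in \<open>simp add: bm_def ent_PTP div2_lt\<close>)

lemma Dset_off:
  assumes D: "D \<in> Dset X a" and n: "n \<in> X" and a: "\<bar>a\<bar> \<le> 1"
  shows "gT a D n 0 1 = 0" "gT a D n 1 0 = 0"
proof -
  have DA: "D \<in> A0" using D by (simp add: Dset_def A0_on_def)
  obtain c where c: "D (fvec0 a n) = vscale c (fvec0 a n)" using D n by (auto simp: Dset_def)
  obtain \<mu> where mu: "D (fvec1 a n) = vscale \<mu> (fvec1 a n)" using D n by (auto simp: Dset_def)
  have f0: "blockop (ent D) (fvec0 a n) = vscale c (fvec0 a n)" using c A0_matrix[OF DA] by simp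
  have f1: "blockop (ent D) (fvec1 a n) = vscale \<mu> (fvec1 a n)" using mu A0_matrix[OF DA] by simp
  have e0: "blockop (ent D) (fvec0 a n) j = c * fvec0 a n j" for j using f0 by (simp add: vscale_def)
  have e1: "blockop (ent D) (fvec1 a n) j = \<mu> * fvec1 a n j" for j using f1 by (simp add: vscale_def)
  define x where "x = complex_of_real a"
  define y where "y = complex_of_real (sqrt (1 - a\<^sup>2))"
  have "fvec0 a n \<in> ell2" "fvec1 a n \<in> ell2" unfolding fvec0_eq fvec1_eq by (rule fvec_in)+
  then have
    A: "ent D (2*n) (2*n) * x + ent D (2*n) (2*n+1) * y = c * x" and
    B: "ent D (2*n+1) (2*n) * x + ent D (2*n+1) (2*n+1) * y = c * y" and
    C: "ent D (2*n) (2*n) * y - ent D (2*n) (2*n+1) * x = \<mu> * y" and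
    E: "ent D (2*n+1) (2*n) * y - ent D (2*n+1) (2*n+1) * x = - \<mu> * x"
    using e0[of "2*n"] e0[of "2*n+1"] e1[of "2*n"] e1[of "2*n+1"]
    by (simp_all add: blockop_def fvec0_eq fvec1_eq fco_def x_def y_def)
  show "gT a D n 0 1 = 0" "gT a D n 1 0 = 0"
    using A B C E
    by (simp_all add: gT_def gm_def bm_def sum2 fco_def flip: x_def y_def) algebra+
qed


lemma Mset_offc:
  assumes a: "\<bar>\<alpha> X\<bar> \<le> 1" and T: "T \<in> Mset \<X> \<alpha>" and X: "X \<in> \<X>"
  shows "offc (\<alpha> X) X T"
proof -
  let ?a = "\<alpha> X"
  have TA: "T \<in> A0" using T by (simp add: Mset_def)
  have "op_mult (proj X) (op_mult T (proj X)) \<in> DKset X ?a" using T X by (simp add: Mset_def)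
  then obtain D R where eq: "op_mult (proj X) (op_mult T (proj X)) = op_add D R"
    and D: "D \<in> Dset X ?a" and Rc: "compact_op R" and R: "R \<in> A0_on X"
    unfolding DKset_def by blast
  have RA: "R \<in> A0" using R by (simp add: A0_on_def)
  have ev: "evan R" by (rule compact_evan[OF RA Rc])
  have g: "gT ?a T n k l = gT ?a D n k l + gT ?a R n k l" if "n \<in> X" for n k l
    using gT_PTP[OF A0_Bop[OF TA] that, of ?a k l] by (simp add: eq gT_add)
  show ?thesis unfolding offc_def
  proof (intro allI impI)
    fix \<epsilon> :: real assume e: "0 < \<epsilon>"
    obtain N where N: "\<And>n k l. N \<le> n \<Longrightarrow> cmod (gT ?a R n k l) < \<epsilon>" using evan_gT[OF ev a e] by blast
    show "\<exists>N. \<forall>n\<in>X. N \<le> n \<longrightarrow> cmod (gT ?a T n 0 1) < \<epsilon> \<and> cmod (gT ?a T n 1 0) < \<epsilon>"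
      using N g Dset_off[OF D _ a] by (intro exI[of _ N]) auto
  qed
qed

lemma proj_blockop: "proj X = blockop (\<lambda>j i. if j div 2 \<in> X \<and> i = j then 1 else 0)"
proof
  fix x
  show "proj X x = blockop (\<lambda>j i. if j div 2 \<in> X \<and> i = j then 1 else 0) x"
  proof (cases "x \<in> ell2")
    case True
    have "j = 2 * (j div 2) \<or> j = 2 * (j div 2) + 1" for j :: nat by presburger
    then show ?thesis using True unfolding proj_def blockop_def by (auto intro!: ext)
  next
    case False then show ?thesis by (simp add: proj_def blockop_def)
  qed
qed

lemma proj_A0: "proj X \<in> A0"
  unfolding proj_blockop by (rule blockop_A0[where K=1]) auto

lemma PTP_A0: "T \<in> A0 \<Longrightarrow> op_mult (proj X) (op_mult T (proj X)) \<in> A0"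
  by (intro A0_mult proj_A0)

lemma cmod_fgf: assumes "\<bar>a\<bar> \<le> 1" shows "cmod (fco a k u * g * fco a l v) \<le> cmod g"
  unfolding norm_mult using fco_bound[OF assms] by (intro prod3_le) auto

lemma DK_intro:
  assumes a: "\<bar>a\<bar> \<le> 1" and T: "T \<in> A0" and off: "offc a X T"
  shows "op_mult (proj X) (op_mult T (proj X)) \<in> DKset X a"
proof -
  obtain K where K: "\<And>j i. cmod (ent T j i) \<le> K" using A0_bound[OF T] by blast
  define G where "G n k l = gT a T n k l" for n k l
  have GK: "cmod (G n k l) \<le> 4 * K" for n k l unfolding G_def by (rule gT_bound[OF a K])
  define DE where "DE j i = (if j div 2 \<in> X then fco a 0 (j mod 2) * G (j div 2) 0 0 * fco a 0 (i mod 2)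
      + fco a 1 (j mod 2) * G (j div 2) 1 1 * fco a 1 (i mod 2) else 0)" for j i
  define RE where "RE j i = (if j div 2 \<in> X then fco a 0 (j mod 2) * G (j div 2) 0 1 * fco a 1 (i mod 2)
      + fco a 1 (j mod 2) * G (j div 2) 1 0 * fco a 0 (i mod 2) else 0)" for j i
  have DEK: "cmod (DE j i) \<le> 8 * K" for j i
  proof -
    have "cmod (fco a 0 (j mod 2) * G (j div 2) 0 0 * fco a 0 (i mod 2)
      + fco a 1 (j mod 2) * G (j div 2) 1 1 * fco a 1 (i mod 2)) \<le> 4 * K + 4 * K"
      by (rule order_trans[OF norm_triangle_ineq add_mono[OF order_trans[OF cmod_fgf[OF a] GK]
            order_trans[OF cmod_fgf[OF a] GK]]])
    then show ?thesis unfolding DE_def using order_trans[OF norm_ge_zero K[of 0 0]] by auto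
  qed
  have REG: "cmod (RE j i) \<le> (if j div 2 \<in> X then cmod (G (j div 2) 0 1) + cmod (G (j div 2) 1 0) else 0)" for j i
    unfolding RE_def
    using order_trans[OF norm_triangle_ineq add_mono[OF cmod_fgf[OF a] cmod_fgf[OF a]]] by auto
  have REK: "cmod (RE j i) \<le> 8 * K" for j i
  proof (cases "j div 2 \<in> X")
    case True
    then show ?thesis using REG[of j i] add_mono[OF GK GK, of "j div 2" 0 1 "j div 2" 1 0] by simp
  next
    case False
    then show ?thesis using order_trans[OF norm_ge_zero K[of 0 0]] by (simp add: RE_def)
  qed
  define D where "D = blockop DE"
  define R where "R = blockop RE"
  have DX: "D \<in> A0_on X" unfolding D_def by (rule blockop_A0_on[OF _ DEK]) (simp add: DE_def)
  have RX: "R \<in> A0_on X" unfolding R_def by (rule blockop_A0_on[OF _ REK]) (simp add: RE_def)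
  have RA: "R \<in> A0" using RX by (simp add: A0_on_def)
  have iden: "ent T j i = DE j i + RE j i" if "i div 2 = j div 2" "j div 2 \<in> X" for j i
  proof -
    define n where "n = j div 2"
    have j: "j = 2*n + j mod 2" unfolding n_def by simp
    have i: "i = 2*n + i mod 2" unfolding n_def using that(1) by (metis div_mult_mod_eq add.commute mult.commute)
    have "ent T j i = ent T (2*n + j mod 2) (2*n + i mod 2)" using i j by simp
    also have "\<dots> = (\<Sum>k<2. \<Sum>l<2. fco a k (j mod 2) * gT a T n k l * fco a l (i mod 2))"
      by (rule ent_from_gT[OF a]) auto
    also have "\<dots> = DE j i + RE j i"
      using that by (simp add: sum2 DE_def RE_def G_def n_def algebra_simps)
    finally show ?thesis .
  qed
  have PTP: "op_mult (proj X) (op_mult T (proj X)) = op_add D R"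
  proof -
    have "op_mult (proj X) (op_mult T (proj X)) = blockop (ent (op_mult (proj X) (op_mult T (proj X))))"
      by (rule A0_matrix[OF PTP_A0[OF T]])
    also have "\<dots> = blockop (\<lambda>j i. DE j i + RE j i)"
      by (rule blockop_cong) (auto simp: ent_PTP[OF A0_Bop[OF T]] iden DE_def RE_def)
    also have "\<dots> = op_add D R" unfolding D_def R_def by (rule op_add_blockop[symmetric])
    finally show ?thesis .
  qed
  have eig: "D (fvec0 a n) = vscale (G n 0 0) (fvec0 a n) \<and> D (fvec1 a n) = vscale (G n 1 1) (fvec1 a n)"
    if n: "n \<in> X" for n
  proof -
    have o00: "fco a 0 0 * fco a 0 0 + fco a 0 1 * fco a 0 1 = 1" using fco_orth[OF a, of 0 0] by simp
    have o10: "fco a 1 0 * fco a 0 0 + fco a 1 1 * fco a 0 1 = 0" using fco_orth[OF a, of 1 0] by simp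
    have o01: "fco a 0 0 * fco a 1 0 + fco a 0 1 * fco a 1 1 = 0" using fco_orth[OF a, of 0 1] by simp
    have o11: "fco a 1 0 * fco a 1 0 + fco a 1 1 * fco a 1 1 = 1" using fco_orth[OF a, of 1 1] by simp
    have in0: "fvec0 a n \<in> ell2" and in1: "fvec1 a n \<in> ell2" unfolding fvec0_eq fvec1_eq by (rule fvec_in)+
    have A: "D (fvec0 a n) j = G n 0 0 * fvec0 a n j" for j
    proof (cases "j div 2 = n")
      case True
      have "D (fvec0 a n) j = fco a 0 (j mod 2) * G n 0 0 * (fco a 0 0 * fco a 0 0 + fco a 0 1 * fco a 0 1)
          + fco a 1 (j mod 2) * G n 1 1 * (fco a 1 0 * fco a 0 0 + fco a 1 1 * fco a 0 1)"
        using in0 True n unfolding D_def blockop_def by (simp add: fvec0_eq DE_def algebra_simps)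
      then show ?thesis using True o00 o10 by (simp add: fvec0_eq)
    next
      case False
      then show ?thesis using in0 unfolding D_def blockop_def by (simp add: fvec0_eq)
    qed
    have B: "D (fvec1 a n) j = G n 1 1 * fvec1 a n j" for j
    proof (cases "j div 2 = n")
      case True
      have "D (fvec1 a n) j = fco a 0 (j mod 2) * G n 0 0 * (fco a 0 0 * fco a 1 0 + fco a 0 1 * fco a 1 1)
          + fco a 1 (j mod 2) * G n 1 1 * (fco a 1 0 * fco a 1 0 + fco a 1 1 * fco a 1 1)"
        using in1 True n unfolding D_def blockop_def by (simp add: fvec1_eq DE_def algebra_simps)
      then show ?thesis using True o01 o11 by (simp add: fvec1_eq)
    next
      case False
      then show ?thesis using in1 unfolding D_def blockop_def by (simp add: fvec1_eq)
    qed
    show ?thesis using A B by (auto simp: vscale_def)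
  qed
  have DD: "D \<in> Dset X a" unfolding Dset_def using DX eig by blast
  have ev: "evan R" unfolding evan_def
  proof (intro allI impI)
    fix \<epsilon> :: real assume e: "0 < \<epsilon>"
    have "0 < \<epsilon> / 2" using e by simp
    from off[unfolded offc_def, rule_format, OF this] obtain N where
      N: "\<And>n. n \<in> X \<Longrightarrow> N \<le> n \<Longrightarrow> cmod (gT a T n 0 1) < \<epsilon> / 2 \<and> cmod (gT a T n 1 0) < \<epsilon> / 2" by blast
    have "cmod (ent R j i) < \<epsilon>" if "2 * N \<le> j" for j i
    proof -
      have "cmod (ent R j i) \<le> cmod (RE j i)" unfolding R_def ent_blockop by auto
      also have "\<dots> < \<epsilon>"
      proof (cases "j div 2 \<in> X")
        case True
        have "N \<le> j div 2" using that by linarith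
        then show ?thesis using REG[of j i] N[OF True] True unfolding G_def by auto
      next
        case False then show ?thesis using e by (simp add: RE_def)
      qed
      finally show ?thesis .
    qed
    then show "\<exists>N. \<forall>j i. N \<le> j \<longrightarrow> cmod (ent R j i) < \<epsilon>" by blast
  qed
  have Rc: "compact_op R" by (rule evan_compact[OF RA ev])
  show ?thesis unfolding DKset_def using PTP DD Rc RX by blast
qed

lemma Mset_char:
  assumes a: "\<And>X. X \<in> \<X> \<Longrightarrow> \<bar>\<alpha> X\<bar> \<le> 1"
  shows "Mset \<X> \<alpha> = {T \<in> A0. \<forall>X\<in>\<X>. offc (\<alpha> X) X T}"
proof
  show "Mset \<X> \<alpha> \<subseteq> {T \<in> A0. \<forall>X\<in>\<X>. offc (\<alpha> X) X T}"
  proof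
    fix T assume T: "T \<in> Mset \<X> \<alpha>"
    then have "T \<in> A0" by (simp add: Mset_def)
    moreover have "offc (\<alpha> X) X T" if "X \<in> \<X>" for X by (rule Mset_offc[OF a[OF that] T that])
    ultimately show "T \<in> {T \<in> A0. \<forall>X\<in>\<X>. offc (\<alpha> X) X T}" by blast
  qed
  show "{T \<in> A0. \<forall>X\<in>\<X>. offc (\<alpha> X) X T} \<subseteq> Mset \<X> \<alpha>"
    using DK_intro[OF a] by (auto simp: Mset_def)
qed


definition sm :: "nat set \<Rightarrow> (nat \<Rightarrow> complex) \<Rightarrow> bool" where
  "sm X f \<longleftrightarrow> (\<forall>\<epsilon>>0. \<exists>N. \<forall>n\<in>X. N \<le> n \<longrightarrow> cmod (f n) < \<epsilon>)"

lemma offc_sm: "offc a X T \<longleftrightarrow> sm X (\<lambda>n. gT a T n 0 1) \<and> sm X (\<lambda>n. gT a T n 1 0)"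
proof
  assume h: "offc a X T"
  show "sm X (\<lambda>n. gT a T n 0 1) \<and> sm X (\<lambda>n. gT a T n 1 0)"
    unfolding sm_def
  proof (intro conjI allI impI)
    fix \<epsilon> :: real assume e: "0 < \<epsilon>"
    from h[unfolded offc_def, rule_format, OF e] obtain N where
      N: "\<forall>n\<in>X. N \<le> n \<longrightarrow> cmod (gT a T n 0 1) < \<epsilon> \<and> cmod (gT a T n 1 0) < \<epsilon>" by blast
    then show "\<exists>N. \<forall>n\<in>X. N \<le> n \<longrightarrow> cmod (gT a T n 0 1) < \<epsilon>" by blast
    from N show "\<exists>N. \<forall>n\<in>X. N \<le> n \<longrightarrow> cmod (gT a T n 1 0) < \<epsilon>" by blast
  qed
next
  assume h: "sm X (\<lambda>n. gT a T n 0 1) \<and> sm X (\<lambda>n. gT a T n 1 0)"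
  show "offc a X T" unfolding offc_def
  proof (intro allI impI)
    fix \<epsilon> :: real assume e: "0 < \<epsilon>"
    obtain N1 where N1: "\<And>n. n \<in> X \<Longrightarrow> N1 \<le> n \<Longrightarrow> cmod (gT a T n 0 1) < \<epsilon>"
      using h e unfolding sm_def by blast
    obtain N2 where N2: "\<And>n. n \<in> X \<Longrightarrow> N2 \<le> n \<Longrightarrow> cmod (gT a T n 1 0) < \<epsilon>"
      using h e unfolding sm_def by blast
    show "\<exists>N. \<forall>n\<in>X. N \<le> n \<longrightarrow> cmod (gT a T n 0 1) < \<epsilon> \<and> cmod (gT a T n 1 0) < \<epsilon>"
      using N1 N2 by (intro exI[of _ "max N1 N2"]) auto
  qed
qed

lemma sm_add: assumes "sm X f" "sm X g" shows "sm X (\<lambda>n. f n + g n)"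
  unfolding sm_def
proof (intro allI impI)
  fix \<epsilon> :: real assume e: "0 < \<epsilon>"
  then have e2: "0 < \<epsilon> / 2" by simp
  obtain N1 where N1: "\<And>n. n \<in> X \<Longrightarrow> N1 \<le> n \<Longrightarrow> cmod (f n) < \<epsilon> / 2"
    using assms(1) e2 unfolding sm_def by blast
  obtain N2 where N2: "\<And>n. n \<in> X \<Longrightarrow> N2 \<le> n \<Longrightarrow> cmod (g n) < \<epsilon> / 2"
    using assms(2) e2 unfolding sm_def by blast
  have "cmod (f n + g n) < \<epsilon>" if "n \<in> X" "max N1 N2 \<le> n" for n
    using N1[of n] N2[of n] that norm_triangle_ineq[of "f n" "g n"] by simp
  then show "\<exists>N. \<forall>n\<in>X. N \<le> n \<longrightarrow> cmod (f n + g n) < \<epsilon>" by blast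
qed

lemma sm_le: assumes "sm X f" "\<And>n. n \<in> X \<Longrightarrow> cmod (g n) \<le> B * cmod (f n)" shows "sm X g"
  unfolding sm_def
proof (intro allI impI)
  fix \<epsilon> :: real assume e: "0 < \<epsilon>"
  define B' where "B' = max B 1"
  have B': "0 < B'" "B \<le> B'" by (auto simp: B'_def)
  have e2: "0 < \<epsilon> / B'" using e B' by simp
  obtain N where N: "\<And>n. n \<in> X \<Longrightarrow> N \<le> n \<Longrightarrow> cmod (f n) < \<epsilon> / B'"
    using assms(1) e2 unfolding sm_def by blast
  have "cmod (g n) < \<epsilon>" if "n \<in> X" "N \<le> n" for n
  proof -
    have "cmod (g n) \<le> B' * cmod (f n)"
    proof -
      have "B * cmod (f n) \<le> B' * cmod (f n)" using B' by (intro mult_right_mono) auto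
      then show ?thesis using assms(2)[OF that(1)] by linarith
    qed
    also have "\<dots> < B' * (\<epsilon> / B')" using N[OF that] B' by (intro mult_strict_left_mono) auto
    also have "\<dots> = \<epsilon>" using B' by simp
    finally show ?thesis .
  qed
  then show "\<exists>N. \<forall>n\<in>X. N \<le> n \<longrightarrow> cmod (g n) < \<epsilon>" by blast
qed

lemma sm_neg: "sm X f \<Longrightarrow> sm X (\<lambda>n. - f n)"
  by (rule sm_le[where B=1]) auto
lemma sm_diff: "sm X f \<Longrightarrow> sm X g \<Longrightarrow> sm X (\<lambda>n. f n - g n)"
proof -
  assume "sm X f" "sm X g"
  then have "sm X (\<lambda>n. f n + - g n)" by (intro sm_add sm_neg)
  then show ?thesis by simp
qed
lemma sm_cnj: "sm X f \<Longrightarrow> sm X (\<lambda>n. cnj (f n))"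
  by (rule sm_le[where B=1]) auto
lemma sm_multL: assumes "sm X f" "\<And>n. cmod (c n) \<le> B" shows "sm X (\<lambda>n. c n * f n)"
proof (rule sm_le[where B=B, OF assms(1)])
  fix n show "cmod (c n * f n) \<le> B * cmod (f n)"
    unfolding norm_mult by (rule mult_right_mono[OF assms(2)]) simp
qed
lemma sm_multR: "sm X f \<Longrightarrow> (\<And>n. cmod (c n) \<le> B) \<Longrightarrow> sm X (\<lambda>n. f n * c n)"
  using sm_multL[of X f c B] by (simp add: mult.commute)
lemma sm_cong: "sm X f \<Longrightarrow> (\<And>n. n \<in> X \<Longrightarrow> g n = f n) \<Longrightarrow> sm X g"
  by (rule sm_le[where B=1]) auto
lemma sm_zero: "sm X (\<lambda>n. 0)" unfolding sm_def by auto


lemma zero_op_eq: "(\<lambda>x. \<lambda>j. 0) = blockop (\<lambda>j i. 0)"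
  by (rule ext) (simp add: blockop_def)

lemma gT_zero_op: "gT a (\<lambda>x. \<lambda>j. 0) n k l = 0"
  by (simp add: gT_def gm_def bm_def ent_def)

lemma zero_A0: "(\<lambda>x. \<lambda>j. 0) \<in> A0"
  unfolding zero_op_eq by (rule blockop_A0[where K=0]) simp

lemma offc_zero: "offc a X (\<lambda>x. \<lambda>j. 0)"
  unfolding offc_sm gT_zero_op by (simp add: sm_zero)

lemma offc_add: "offc a X T \<Longrightarrow> offc a X S \<Longrightarrow> offc a X (op_add T S)"
  unfolding offc_sm gT_add by (auto intro: sm_add)

lemma offc_scale: "offc a X T \<Longrightarrow> offc a X (op_scale c T)"
  unfolding offc_sm gT_scale by (auto intro: sm_multL[where B="cmod c"])

lemma offc_mult:
  assumes a: "\<bar>a\<bar> \<le> 1" and T: "T \<in> A0" and S: "S \<in> A0" and oT: "offc a X T" and oS: "offc a X S"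
  shows "offc a X (op_mult T S)"
proof -
  obtain K1 where K1: "\<And>j i. cmod (ent T j i) \<le> K1" using A0_bound[OF T] by blast
  obtain K2 where K2: "\<And>j i. cmod (ent S j i) \<le> K2" using A0_bound[OF S] by blast
  have bT: "\<And>n. cmod (gT a T n k l) \<le> 4 * K1" for k l by (rule gT_bound[OF a K1])
  have bS: "\<And>n. cmod (gT a S n k l) \<le> 4 * K2" for k l by (rule gT_bound[OF a K2])
  have e01: "gT a (op_mult T S) n 0 1 = gT a T n 0 0 * gT a S n 0 1 + gT a T n 0 1 * gT a S n 1 1" for n
    by (simp add: gT_mult[OF T S a] sum2)
  have e10: "gT a (op_mult T S) n 1 0 = gT a T n 1 0 * gT a S n 0 0 + gT a T n 1 1 * gT a S n 1 0" for n
    by (simp add: gT_mult[OF T S a] sum2)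
  show ?thesis unfolding offc_sm e01 e10
    using oT oS unfolding offc_sm
    by (intro conjI sm_add sm_multL[OF _ bT] sm_multR[OF _ bS]) auto
qed

lemma fco_cnj[simp]: "cnj (fco a k u) = fco a k u"
  by (simp add: fco_def)

definition adjm :: "op \<Rightarrow> nat \<Rightarrow> nat \<Rightarrow> complex" where
  "adjm T j i = cnj (ent T i j)"

lemma adj_A0: assumes "T \<in> A0" shows "blockop (adjm T) \<in> A0"
proof -
  obtain K where K: "\<And>j i. cmod (ent T j i) \<le> K" using A0_bound[OF assms] by blast
  show ?thesis by (rule blockop_A0[where K=K]) (simp add: adjm_def K)
qed

lemma gT_adj: "gT a (blockop (adjm T)) n k l = cnj (gT a T n l k)"
  by (simp add: gT_def gm_def bm_def ent_blockop adjm_def sum2 algebra_simps)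

lemma offc_adj: "offc a X T \<Longrightarrow> offc a X (blockop (adjm T))"
  unfolding offc_sm gT_adj by (auto intro: sm_cnj)

lemma inner_pairs:
  assumes u: "u \<in> ell2" and w: "w \<in> ell2"
  shows "(\<lambda>n. u (2*n) * cnj (w (2*n)) + u (2*n+1) * cnj (w (2*n+1))) sums l2inner u w"
proof -
  let ?f = "\<lambda>j. u j * cnj (w j)"
  have "norm (?f j) \<le> (cmod (u j))\<^sup>2 + (cmod (w j))\<^sup>2" for j
  proof -
    have "0 \<le> (cmod (u j) - cmod (w j))\<^sup>2" by simp
    then have "2 * (cmod (u j) * cmod (w j)) \<le> (cmod (u j))\<^sup>2 + (cmod (w j))\<^sup>2"
      by (simp add: power2_eq_square algebra_simps)
    moreover have "0 \<le> cmod (u j) * cmod (w j)" by simp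
    ultimately have "cmod (u j) * cmod (w j) \<le> (cmod (u j))\<^sup>2 + (cmod (w j))\<^sup>2" by linarith
    then show ?thesis by (simp add: norm_mult)
  qed
  moreover have "summable (\<lambda>j. (cmod (u j))\<^sup>2 + (cmod (w j))\<^sup>2)"
    using u w unfolding ell2_def by (intro summable_add) auto
  ultimately have "summable (\<lambda>j. norm (?f j))"
    by (rule_tac summable_comparison_test'[where N=0]) auto
  then have "summable ?f" by (rule summable_norm_cancel)
  then have "(\<lambda>n. sum ?f {n * 2..<n * 2 + 2}) sums suminf ?f"
    by (intro sums_group summable_sums) auto
  moreover have "sum ?f {n * 2..<n * 2 + 2} = u (2*n) * cnj (w (2*n)) + u (2*n+1) * cnj (w (2*n+1))" for n
  proof -
    have "sum ?f {n * 2..<n * 2 + 2} = sum ?f {n * 2..<Suc (Suc (n * 2))}" by simp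
    also have "\<dots> = ?f (n*2) + ?f (Suc (n*2))" by (simp add: atLeastLessThanSuc)
    finally show ?thesis by (simp add: mult.commute)
  qed
  ultimately show ?thesis unfolding l2inner_def by simp
qed

lemma adj_is_adjoint: assumes T: "T \<in> A0" shows "is_adjoint T (blockop (adjm T))"
  unfolding is_adjoint_def
proof (intro conjI ballI)
  show "blockop (adjm T) \<in> Bop" using adj_A0[OF T] by (rule A0_Bop)
  fix x y assume x: "x \<in> ell2" and y: "y \<in> ell2"
  have Tx: "T x = blockop (ent T) x" by (rule fun_cong[OF A0_matrix[OF T]])
  have TB: "T \<in> Bop" using T by (rule A0_Bop)
  have s1: "(\<lambda>n. T x (2*n) * cnj (y (2*n)) + T x (2*n+1) * cnj (y (2*n+1))) sums l2inner (T x) y"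
    by (rule inner_pairs[OF bop_ell2[OF TB x] y])
  have SB: "blockop (adjm T) \<in> Bop" using adj_A0[OF T] by (rule A0_Bop)
  have s2: "(\<lambda>n. x (2*n) * cnj (blockop (adjm T) y (2*n)) + x (2*n+1) * cnj (blockop (adjm T) y (2*n+1))) sums l2inner x (blockop (adjm T) y)"
    by (rule inner_pairs[OF x bop_ell2[OF SB y]])
  have eq: "T x (2*n) * cnj (y (2*n)) + T x (2*n+1) * cnj (y (2*n+1)) =
        x (2*n) * cnj (blockop (adjm T) y (2*n)) + x (2*n+1) * cnj (blockop (adjm T) y (2*n+1))" for n
    unfolding Tx using x y by (simp add: blockop_def adjm_def algebra_simps)
  show "l2inner (T x) y = l2inner x (blockop (adjm T) y)"
    using s1 s2 unfolding eq by (rule sums_unique2)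
qed

lemma opnorm_ent:
  assumes im: "\<And>x. x \<in> ell2 \<Longrightarrow> A x \<in> ell2" and bd: "\<And>x. x \<in> ell2 \<Longrightarrow> l2norm x \<le> 1 \<Longrightarrow> l2norm (A x) \<le> C"
  shows "cmod (ent A j i) \<le> opnorm A"
proof -
  have "cmod (ent A j i) \<le> l2norm (A (basis_vec i))"
    unfolding ent_def by (rule coord_le[OF im[OF basis_in]])
  also have "\<dots> \<le> opnorm A" unfolding opnorm_def
  proof (rule cSup_upper)
    show "l2norm (A (basis_vec i)) \<in> {l2norm (A x) |x. x \<in> ell2 \<and> l2norm x \<le> 1}"
      by (intro CollectI exI[of _ "basis_vec i"]) simp
    show "bdd_above {l2norm (A x) |x. x \<in> ell2 \<and> l2norm x \<le> 1}"
      by (rule bdd_aboveI[where M=C]) (use bd in blast)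
  qed
  finally show ?thesis .
qed

lemma opnorm_ent_sub:
  assumes T: "T \<in> Bop" and S: "S \<in> Bop"
  shows "cmod (ent T j i - ent S j i) \<le> opnorm (op_sub T S)"
proof -
  obtain C1 where C10: "0 \<le> C1" and C1: "\<And>x. x \<in> ell2 \<Longrightarrow> l2norm (T x) \<le> C1 * l2norm x"
    using bop_bound[OF T] by blast
  obtain C2 where C20: "0 \<le> C2" and C2: "\<And>x. x \<in> ell2 \<Longrightarrow> l2norm (S x) \<le> C2 * l2norm x"
    using bop_bound[OF S] by blast
  have im: "op_sub T S x \<in> ell2" if "x \<in> ell2" for x
    unfolding op_sub_def by (rule ell2_vsub[OF bop_ell2[OF T that] bop_ell2[OF S that]])
  have bd: "l2norm (op_sub T S x) \<le> sqrt (2 * C1\<^sup>2 + 2 * C2\<^sup>2)" if x: "x \<in> ell2" "l2norm x \<le> 1" for x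
  proof -
    have "l2norm (T x) \<le> C1" using C1[OF x(1)] mult_left_mono[OF x(2) C10] by simp
    moreover have "l2norm (S x) \<le> C2" using C2[OF x(1)] mult_left_mono[OF x(2) C20] by simp
    ultimately have "(l2norm (T x))\<^sup>2 \<le> C1\<^sup>2" "(l2norm (S x))\<^sup>2 \<le> C2\<^sup>2"
      using power_mono[OF _ l2norm_nonneg[OF bop_ell2[OF T x(1)]], of C1 2]
        power_mono[OF _ l2norm_nonneg[OF bop_ell2[OF S x(1)]], of C2 2] by auto
    then have "(l2norm (op_sub T S x))\<^sup>2 \<le> 2 * C1\<^sup>2 + 2 * C2\<^sup>2"
      using l2norm_vsub_sq[OF bop_ell2[OF T x(1)] bop_ell2[OF S x(1)]] unfolding op_sub_def by linarith
    then show ?thesis by (rule real_le_rsqrt)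
  qed
  have "cmod (ent (op_sub T S) j i) \<le> opnorm (op_sub T S)" by (rule opnorm_ent[OF im bd])
  then show ?thesis by (simp add: ent_sub)
qed

lemma gT_diff_bound:
  assumes a: "\<bar>a\<bar> \<le> 1" and B: "\<And>j i. cmod (ent T j i - ent S j i) \<le> B"
  shows "cmod (gT a S n k l - gT a T n k l) \<le> 4 * B"
proof -
  have "cmod (gT a (op_sub T S) n k l) \<le> 4 * B" by (rule gT_bound[OF a]) (simp add: ent_sub B)
  then show ?thesis by (simp add: gT_sub norm_minus_commute)
qed


lemma limit_A0:
  fixes Tn :: "nat \<Rightarrow> op"
  assumes TA: "\<And>p. Tn p \<in> A0" and S: "S \<in> Bop" and d: "(\<lambda>p. opnorm (op_sub (Tn p) S)) \<longlonglongrightarrow> 0"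
  shows "S \<in> A0"
  unfolding A0_def mem_Collect_eq
proof (intro conjI allI impI)
  show "S \<in> Bop" by (rule S)
  fix k m assume h: "l2inner (S (basis_vec k)) (basis_vec m) \<noteq> 0"
  have "k div 2 = m div 2"
  proof (rule ccontr)
    assume ne: "k div 2 \<noteq> m div 2"
    have z: "ent (Tn p) m k = 0" for p using A0_ent[OF TA[of p], of m k] ne by auto
    have "cmod (ent S m k) \<le> opnorm (op_sub (Tn p) S)" for p
      using opnorm_ent_sub[OF A0_Bop[OF TA[of p]] S, of m k] z[of p] by simp
    then have "cmod (ent S m k) \<le> 0" by (intro LIMSEQ_le_const[OF d]) auto
    then show False using h by (simp add: ent_def)
  qed
  then show "\<exists>n. {k, m} \<subseteq> {2 * n, 2 * n + 1}"
    by (intro exI[of _ "m div 2"]) (auto simp: div2_iff)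
qed

lemma limit_offc:
  fixes Tn :: "nat \<Rightarrow> op"
  assumes a: "\<bar>a\<bar> \<le> 1" and TA: "\<And>p. Tn p \<in> A0" and To: "\<And>p. offc a X (Tn p)"
    and S: "S \<in> Bop" and d: "(\<lambda>p. opnorm (op_sub (Tn p) S)) \<longlonglongrightarrow> 0"
  shows "offc a X S"
proof -
  have gen: "sm X (\<lambda>n. gT a S n k l)" if sp: "\<And>p. sm X (\<lambda>n. gT a (Tn p) n k l)" for k l
    unfolding sm_def
  proof (intro allI impI)
    fix \<epsilon> :: real assume e: "0 < \<epsilon>"
    have "0 < \<epsilon> / 8" using e by simp
    then obtain p where p: "norm (opnorm (op_sub (Tn p) S) - 0) < \<epsilon> / 8"
      using d unfolding LIMSEQ_iff by blast
    define B where "B = opnorm (op_sub (Tn p) S)"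
    have B: "B < \<epsilon> / 8" using p by (simp add: B_def)
    have eb: "cmod (ent (Tn p) j i - ent S j i) \<le> B" for j i
      unfolding B_def by (rule opnorm_ent_sub[OF A0_Bop[OF TA] S])
    have gd: "cmod (gT a S n k l - gT a (Tn p) n k l) \<le> 4 * B" for n
      by (rule gT_diff_bound[OF a eb])
    have "0 < \<epsilon> / 2" using e by simp
    then obtain N where N: "\<And>n. n \<in> X \<Longrightarrow> N \<le> n \<Longrightarrow> cmod (gT a (Tn p) n k l) < \<epsilon> / 2"
      using sp[of p] unfolding sm_def by blast
    have "cmod (gT a S n k l) < \<epsilon>" if "n \<in> X" "N \<le> n" for n
    proof -
      have "cmod (gT a S n k l) \<le> cmod (gT a (Tn p) n k l) + cmod (gT a S n k l - gT a (Tn p) n k l)"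
        by (rule norm_triangle_sub)
      then show ?thesis using N[OF that] gd[of n] B by linarith
    qed
    then show "\<exists>N. \<forall>n\<in>X. N \<le> n \<longrightarrow> cmod (gT a S n k l) < \<epsilon>" by blast
  qed
  show ?thesis unfolding offc_sm
    using To unfolding offc_sm by (intro conjI gen) auto
qed

lemma comm_compact:
  assumes wide: "wide \<X>" and a: "\<And>X. X \<in> \<X> \<Longrightarrow> \<bar>\<alpha> X\<bar> \<le> 1"
    and T: "T \<in> A0" and S: "S \<in> A0"
    and oT: "\<And>X. X \<in> \<X> \<Longrightarrow> offc (\<alpha> X) X T" and oS: "\<And>X. X \<in> \<X> \<Longrightarrow> offc (\<alpha> X) X S"
  shows "compact_op (op_sub (op_mult T S) (op_mult S T))"
proof -
  define C where "C = op_sub (op_mult T S) (op_mult S T)"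
  have CA: "C \<in> A0" unfolding C_def by (intro A0_sub A0_mult T S)
  have "evan C"
  proof (rule ccontr)
    assume "\<not> evan C"
    then obtain \<epsilon> where e: "0 < \<epsilon>" and big: "\<And>N. \<exists>j i. N \<le> j \<and> \<epsilon> \<le> cmod (ent C j i)"
      unfolding evan_def by (auto simp: not_less)
    define A where "A = {n. \<exists>j i. j div 2 = n \<and> \<epsilon> \<le> cmod (ent C j i)}"
    have "infinite A" unfolding infinite_nat_iff_unbounded_le
    proof
      fix m
      obtain j i where "2 * m \<le> j" "\<epsilon> \<le> cmod (ent C j i)" using big by blast
      then show "\<exists>n\<ge>m. n \<in> A" unfolding A_def by (intro exI[of _ "j div 2"]) auto
    qed
    then obtain X where X: "X \<in> \<X>" and inf: "infinite (A \<inter> X)" using wide unfolding wide_def by blast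
    define b where "b = \<alpha> X"
    have ab: "\<bar>b\<bar> \<le> 1" unfolding b_def by (rule a[OF X])
    obtain K1 where K1: "\<And>j i. cmod (ent T j i) \<le> K1" using A0_bound[OF T] by blast
    obtain K2 where K2: "\<And>j i. cmod (ent S j i) \<le> K2" using A0_bound[OF S] by blast
    have bT: "cmod (gT b T n k l) \<le> 4 * K1" for n k l by (rule gT_bound[OF ab K1])
    have bS: "cmod (gT b S n k l) \<le> 4 * K2" for n k l by (rule gT_bound[OF ab K2])
    have sT: "sm X (\<lambda>n. gT b T n 0 1)" "sm X (\<lambda>n. gT b T n 1 0)" using oT[OF X] unfolding offc_sm b_def by auto
    have sS: "sm X (\<lambda>n. gT b S n 0 1)" "sm X (\<lambda>n. gT b S n 1 0)" using oS[OF X] unfolding offc_sm b_def by auto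
    have gC: "gT b C n k l = (\<Sum>m<2. gT b T n k m * gT b S n m l) - (\<Sum>m<2. gT b S n k m * gT b T n m l)"
      if "k < 2" "l < 2" for n k l
      unfolding C_def gT_sub gT_mult[OF T S ab that] gT_mult[OF S T ab that] ..
    have c00: "sm X (\<lambda>n. gT b C n 0 0)"
      by (rule sm_cong[OF sm_diff[OF sm_multR[where c="\<lambda>n. gT b S n 1 0", OF sT(1) bS] sm_multR[where c="\<lambda>n. gT b T n 1 0", OF sS(1) bT]]])
         (simp add: gC sum2 algebra_simps)
    have c01: "sm X (\<lambda>n. gT b C n 0 1)"
      by (rule sm_cong[OF sm_diff[OF sm_add[OF sm_multL[where c="\<lambda>n. gT b T n 0 0", OF sS(1) bT] sm_multR[where c="\<lambda>n. gT b S n 1 1", OF sT(1) bS]]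
            sm_add[OF sm_multL[where c="\<lambda>n. gT b S n 0 0", OF sT(1) bS] sm_multR[where c="\<lambda>n. gT b T n 1 1", OF sS(1) bT]]]])
         (simp add: gC sum2 algebra_simps)
    have c10: "sm X (\<lambda>n. gT b C n 1 0)"
      by (rule sm_cong[OF sm_diff[OF sm_add[OF sm_multR[where c="\<lambda>n. gT b S n 0 0", OF sT(2) bS] sm_multL[where c="\<lambda>n. gT b T n 1 1", OF sS(2) bT]]
            sm_add[OF sm_multR[where c="\<lambda>n. gT b T n 0 0", OF sS(2) bT] sm_multL[where c="\<lambda>n. gT b S n 1 1", OF sT(2) bS]]]])
         (simp add: gC sum2 algebra_simps)
    have c11: "sm X (\<lambda>n. gT b C n 1 1)"
      by (rule sm_cong[OF sm_diff[OF sm_multR[where c="\<lambda>n. gT b S n 0 1", OF sT(2) bS] sm_multR[where c="\<lambda>n. gT b T n 0 1", OF sS(2) bT]]])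
         (simp add: gC sum2 algebra_simps)
    have e8: "0 < \<epsilon> / 8" using e by simp
    obtain N1 where N1: "\<And>n. n \<in> X \<Longrightarrow> N1 \<le> n \<Longrightarrow> cmod (gT b C n 0 0) < \<epsilon> / 8" using c00 e8 unfolding sm_def by blast
    obtain N2 where N2: "\<And>n. n \<in> X \<Longrightarrow> N2 \<le> n \<Longrightarrow> cmod (gT b C n 0 1) < \<epsilon> / 8" using c01 e8 unfolding sm_def by blast
    obtain N3 where N3: "\<And>n. n \<in> X \<Longrightarrow> N3 \<le> n \<Longrightarrow> cmod (gT b C n 1 0) < \<epsilon> / 8" using c10 e8 unfolding sm_def by blast
    obtain N4 where N4: "\<And>n. n \<in> X \<Longrightarrow> N4 \<le> n \<Longrightarrow> cmod (gT b C n 1 1) < \<epsilon> / 8" using c11 e8 unfolding sm_def by blast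
    define N where "N = max (max N1 N2) (max N3 N4)"
    have notA: "n \<notin> A" if n: "n \<in> X" "N \<le> n" for n
    proof
      assume "n \<in> A"
      then obtain j i where ji: "j div 2 = n" "\<epsilon> \<le> cmod (ent C j i)" unfolding A_def by blast
      show False
      proof (cases "i div 2 = n")
        case False
        then have "ent C j i = 0" using A0_ent[OF CA, of j i] ji(1) by auto
        then show False using ji e by simp
      next
        case True
        have gb: "cmod (gT b C n k l) \<le> \<epsilon> / 8" if "k < 2" "l < 2" for k l
          using that N1[OF n(1)] N2[OF n(1)] N3[OF n(1)] N4[OF n(1)] n(2) unfolding less2 N_def
          by (auto intro: less_imp_le)
        have j: "j = 2*n + j mod 2" using ji(1) by auto
        have i: "i = 2*n + i mod 2" using True by auto
        have "cmod (ent C (2*n + j mod 2) (2*n + i mod 2)) \<le> 4 * (\<epsilon> / 8)"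
          by (rule ent_gT_bound[OF ab _ _ gb]) auto
        then have "cmod (ent C j i) \<le> \<epsilon> / 2" using i j by simp
        then show False using ji e by simp
      qed
    qed
    have "A \<inter> X \<subseteq> {..<N}" using notA by (auto simp: not_le[symmetric])
    then have "finite (A \<inter> X)" using finite_subset by blast
    then show False using inf by simp
  qed
  then show ?thesis unfolding C_def[symmetric] by (rule evan_compact[OF CA])
qed


definition QE :: "real \<Rightarrow> nat set \<Rightarrow> nat \<Rightarrow> nat \<Rightarrow> complex" where
  "QE a X j i = (if j div 2 \<in> X then fco a 0 (j mod 2) * fco a 0 (i mod 2) else 0)"

lemma QE_bound: "\<bar>a\<bar> \<le> 1 \<Longrightarrow> cmod (QE a X j i) \<le> 1"
  using fco_bound[of a] by (auto simp: QE_def norm_mult intro: mult_le_one)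

lemma Q_A0: "\<bar>a\<bar> \<le> 1 \<Longrightarrow> blockop (QE a X) \<in> A0"
  by (rule blockop_A0[OF QE_bound])

lemma gQ_out: "n \<notin> X \<Longrightarrow> gT b (blockop (QE a X)) n k l = 0"
  by (simp add: gT_def gm_def bm_def ent_blockop QE_def div2_lt)

lemma gQ_in: assumes a: "\<bar>a\<bar> \<le> 1" and n: "n \<in> X" and kl: "k < 2" "l < 2"
  shows "gT a (blockop (QE a X)) n k l = (if k = 0 \<and> l = 0 then 1 else 0)"
proof -
  have "gT a (blockop (QE a X)) n k l =
     (fco a k 0 * fco a 0 0 + fco a k 1 * fco a 0 1) * (fco a 0 0 * fco a l 0 + fco a 0 1 * fco a l 1)"
    using n by (simp add: gT_def gm_def bm_def ent_blockop QE_def sum2 algebra_simps)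
  also have "\<dots> = (if k = 0 \<and> l = 0 then 1 else 0)"
    using fco_orth[OF a kl(1), of 0] fco_orth[OF a _ kl(2), of 0] by simp
  finally show ?thesis .
qed

lemma Q_offc:
  assumes coh: "coherent \<X> \<alpha>" and X: "X \<in> \<X>" and Y: "Y \<in> \<X>"
  shows "offc (\<alpha> Y) Y (blockop (QE (\<alpha> X) X))"
proof (cases "infinite (X \<inter> Y)")
  case True
  then have eq: "\<alpha> Y = \<alpha> X" using coh X Y unfolding coherent_def by metis
  have a: "\<bar>\<alpha> X\<bar> \<le> 1" using coh X unfolding coherent_def by fastforce
  have "gT (\<alpha> X) (blockop (QE (\<alpha> X) X)) n 0 1 = 0 \<and> gT (\<alpha> X) (blockop (QE (\<alpha> X) X)) n 1 0 = 0" for n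
    by (cases "n \<in> X") (simp_all add: gQ_in[OF a] gQ_out)
  then show ?thesis unfolding offc_def eq by simp
next
  case False
  then obtain M where M: "\<And>n. n \<in> X \<inter> Y \<Longrightarrow> n < M" using finite_nat_bounded by blast
  show ?thesis unfolding offc_def
  proof (intro allI impI exI[of _ M] ballI)
    fix \<epsilon> :: real and n assume e: "0 < \<epsilon>" and n: "n \<in> Y" and "M \<le> n"
    then have "n \<notin> X" using M[of n] by auto
    then show "cmod (gT (\<alpha> Y) (blockop (QE (\<alpha> X) X)) n 0 1) < \<epsilon> \<and> cmod (gT (\<alpha> Y) (blockop (QE (\<alpha> X) X)) n 1 0) < \<epsilon>"
      using e by (simp add: gQ_out)
  qed
qed

lemma maximal_offc:
  assumes coh: "coherent \<X> \<alpha>" and X: "X \<in> \<X>" and T: "T \<in> A0"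
    and Qc: "almost_commute T (blockop (QE (\<alpha> X) X))"
  shows "offc (\<alpha> X) X T"
proof -
  define a where "a = \<alpha> X"
  have a: "\<bar>a\<bar> \<le> 1" using coh X unfolding coherent_def a_def by fastforce
  define Q where "Q = blockop (QE a X)"
  have QA: "Q \<in> A0" unfolding Q_def by (rule Q_A0[OF a])
  define C where "C = op_sub (op_mult T Q) (op_mult Q T)"
  have CA: "C \<in> A0" unfolding C_def by (intro A0_sub A0_mult T QA)
  have "compact_op C" using Qc unfolding almost_commute_def C_def Q_def a_def .
  then have ev: "evan C" by (rule compact_evan[OF CA])
  have g01: "gT a C n 0 1 = - gT a T n 0 1" and g10: "gT a C n 1 0 = gT a T n 1 0" if n: "n \<in> X" for n
  proof -
    have gQ: "gT a Q n k l = (if k = 0 \<and> l = 0 then 1 else 0)" if "k < 2" "l < 2" for k l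
      unfolding Q_def by (rule gQ_in[OF a n that])
    show "gT a C n 0 1 = - gT a T n 0 1" "gT a C n 1 0 = gT a T n 1 0"
      by (simp_all add: C_def gT_sub gT_mult[OF T QA a] gT_mult[OF QA T a] sum2 gQ)
  qed
  show ?thesis unfolding offc_def a_def[symmetric]
  proof (intro allI impI)
    fix \<epsilon> :: real assume e: "0 < \<epsilon>"
    obtain N where N: "\<And>n k l. N \<le> n \<Longrightarrow> cmod (gT a C n k l) < \<epsilon>" using evan_gT[OF ev a e] by blast
    show "\<exists>N. \<forall>n\<in>X. N \<le> n \<longrightarrow> cmod (gT a T n 0 1) < \<epsilon> \<and> cmod (gT a T n 1 0) < \<epsilon>"
      using N g01 g10 by (intro exI[of _ N]) (metis norm_minus_cancel)
  qed
qed

theorem lemma4p16: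
  fixes \<X> :: "nat set set" and \<alpha> :: "nat set \<Rightarrow> real"
  assumes "wide \<X>" and "coherent \<X> \<alpha>"
  shows "almost_masa A0 (Mset \<X> \<alpha>)"
proof -
  have a: "\<bar>\<alpha> X\<bar> \<le> 1" if "X \<in> \<X>" for X using assms(2) that unfolding coherent_def by fastforce
  define M where "M = {T \<in> A0. \<forall>X\<in>\<X>. offc (\<alpha> X) X T}"
  have MM: "Mset \<X> \<alpha> = M" unfolding M_def by (rule Mset_char[OF a])
  have MA: "M \<subseteq> A0" unfolding M_def by blast
  have cst: "cstar_subalg M" unfolding cstar_subalg_def
  proof (intro conjI ballI allI impI)
    show "M \<subseteq> Bop" using MA A0_Bop by blast
    show "(\<lambda>x. \<lambda>j. 0) \<in> M" unfolding M_def using zero_A0 offc_zero by blast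
    fix S T assume S: "S \<in> M" and T: "T \<in> M"
    show "op_add S T \<in> M" using S T unfolding M_def by (auto intro: A0_add offc_add)
    show "op_mult S T \<in> M" using S T a unfolding M_def by (auto intro: A0_mult offc_mult)
  next
    fix c T assume T: "T \<in> M"
    show "op_scale c T \<in> M" using T unfolding M_def by (auto intro: A0_scale offc_scale)
  next
    fix T assume T: "T \<in> M"
    then have TA: "T \<in> A0" by (simp add: M_def)
    have "blockop (adjm T) \<in> M" using T adj_A0[OF TA] unfolding M_def by (auto intro: offc_adj)
    then show "\<exists>S\<in>M. is_adjoint T S" using adj_is_adjoint[OF TA] by blast
  next
    fix Tn S assume h: "(\<forall>n. Tn n \<in> M) \<and> S \<in> Bop \<and> (\<lambda>n. opnorm (op_sub (Tn n) S)) \<longlonglongrightarrow> 0"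
    then have TA: "\<And>p. Tn p \<in> A0" and To: "\<And>p X. X \<in> \<X> \<Longrightarrow> offc (\<alpha> X) X (Tn p)"
      and S: "S \<in> Bop" and d: "(\<lambda>n. opnorm (op_sub (Tn n) S)) \<longlonglongrightarrow> 0"
      unfolding M_def by auto
    have "S \<in> A0" by (rule limit_A0[OF TA S d])
    moreover have "offc (\<alpha> X) X S" if "X \<in> \<X>" for X
      by (rule limit_offc[OF a[OF that] TA To[OF that] S d])
    ultimately show "S \<in> M" unfolding M_def by blast
  qed
  have comm: "almost_commute S T" if "S \<in> M" "T \<in> M" for S T
    unfolding almost_commute_def
    using that unfolding M_def by (intro comm_compact[OF assms(1) a]) auto
  have maxl: "N = M" if N: "cstar_subalg N" "N \<subseteq> A0" "\<forall>S\<in>N. \<forall>T\<in>N. almost_commute S T" "M \<subseteq> N" for N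
  proof
    show "N \<subseteq> M"
    proof
      fix T assume TN: "T \<in> N"
      have TA: "T \<in> A0" using TN N(2) by blast
      have "offc (\<alpha> X) X T" if X: "X \<in> \<X>" for X
      proof -
        have "blockop (QE (\<alpha> X) X) \<in> M"
          unfolding M_def using Q_A0[OF a[OF X]] Q_offc[OF assms(2) X] by blast
        then have "blockop (QE (\<alpha> X) X) \<in> N" using N(4) by blast
        then have "almost_commute T (blockop (QE (\<alpha> X) X))" using N(3) TN by blast
        then show ?thesis by (rule maximal_offc[OF assms(2) X TA])
      qed
      then show "T \<in> M" unfolding M_def using TA by blast
    qed
    show "M \<subseteq> N" by (rule N(4))
  qed
  show ?thesis unfolding almost_masa_def MM
    using cst MA comm maxl by blast
qed


end
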